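(* Let $D$ be an $n\times n$ positive definite density matrix. Assume that $f,g$ are standard functions such that $$g(x)\ge c\,\frac{(x-1)^2}{f(x)}\qquad\text{for all }x>0$$ for some constant $c>0$. Then for all $n\times n$ self-adjoint matrices $A_1,\dots,A_m$, $$\mathrm{Det}\Big(\big[\mathrm{qCov}^g_D(A_i,A_j)\big]_{i,j=1}^m\Big)\ \ge\ \mathrm{Det}\Big(\big[c\,\gamma^f_D([D,A_i],[D,A_j])\big]_{i,j=1}^m\Big).$$ Moreover, equality holds if and only if the matrices $A_i-(\mathrm{Tr}\,DA_i)I$, $1\le i\le m$, are linearly dependent, and in that case both sides are zero.
   Context: A function $f:(0,\infty)\to(0,\infty)$ is called standard if it is operator monotone, $f(1)=1$ and $f(t)=tf(t^{-1})$ for all $t>0$. For a standard $f$ define the mean $M_f(a,b):=bf(a/b)$ for $a,b>0$. For a positive definite density matrix $D$ (i.e. $D>0$, $\mathrm{Tr}\,D=1$), let $\mathbf L_D(X)=DX$, $\mathbf R_D(X)=XD$ on $n\times n$ complex matrices and $\mathbb J^f_D:=f(\mathbf L_D\mathbf R_D^{-1})\mathbf R_D$. The quantum Fisher information is $\gamma^f_D(A,B):=\mathrm{Tr}\,A^*(\mathbb J^f_D)^{-1}(B)$ and the quantum covariance is $\mathrm{qCov}^f_D(A,B):=\mathrm{Tr}\,A^*\mathbb J^f_D(B)-(\mathrm{Tr}\,DA^* )(\mathrm{Tr}\,DB)$. Equivalently, if $D=\mathrm{Diag}(\lambda_1,\dots,\lambda_n)$ with $\lambda_i>0$, then $\gamma^f_D(A,B)=\sum_{i,j}\frac{1}{M_f(\lambda_i,\lambda_j)}\overline{A_{ij}}B_{ij}$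 and $\mathrm{qCov}^f_D(A,B)=\sum_{i,j}M_f(\lambda_i,\lambda_j)\overline{A_{ij}}B_{ij}-\big(\sum_i\lambda_i\overline{A_{ii}}\big)\big(\sum_i\lambda_iB_{ii}\big)$. $[D,A]=DA-AD$, and $I$ is the identity matrix. *)

theory Defs
  imports "Jordan_Normal_Form.Matrix" "Jordan_Normal_Form.Determinant"
begin

definition mtrace :: "complex mat \<Rightarrow> complex" where
  "mtrace A = (\<Sum>i<dim_row A. A $$ (i,i))"

definition adj :: "complex mat \<Rightarrow> complex mat" where
  "adj A = mat (dim_col A) (dim_row A) (\<lambda>(i,j). cnj (A $$ (j,i)))"

definition hermitian :: "nat \<Rightarrow> complex mat \<Rightarrow> bool" where
  "hermitian n A \<longleftrightarrow> A \<in> carrier_mat n n \<and> adj A = A"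

definition unitary :: "nat \<Rightarrow> complex mat \<Rightarrow> bool" where
  "unitary n U \<longleftrightarrow> U \<in> carrier_mat n n \<and> adj U * U = 1\<^sub>m n"

definition qform :: "complex mat \<Rightarrow> complex vec \<Rightarrow> complex" where
  "qform A v = (\<Sum>i<dim_vec v. cnj (v $ i) * (A *\<^sub>v v) $ i)"

definition pos_semidef :: "nat \<Rightarrow> complex mat \<Rightarrow> bool" where
  "pos_semidef n A \<longleftrightarrow> hermitian n A \<and>
     (\<forall>v \<in> carrier_vec n. 0 \<le> Re (qform A v))"

definition pos_def :: "nat \<Rightarrow> complex mat \<Rightarrow> bool" where
  "pos_def n A \<longleftrightarrow> hermitian n A \<and>
     (\<forall>v \<in> carrier_vec n. v \<noteq> 0\<^sub>v n \<longrightarrow> 0 < Re (qform A v))"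

definition loewner_le :: "nat \<Rightarrow> complex mat \<Rightarrow> complex mat \<Rightarrow> bool" where
  "loewner_le n A B \<longleftrightarrow> hermitian n A \<and> hermitian n B \<and> pos_semidef n (B - A)"

definition diag_c :: "nat \<Rightarrow> (nat \<Rightarrow> real) \<Rightarrow> complex mat" where
  "diag_c n l = mat n n (\<lambda>(i,j). if i = j then complex_of_real (l i) else 0)"

definition spec_decomp :: "complex mat \<Rightarrow> complex mat \<times> (nat \<Rightarrow> real)" where
  "spec_decomp A = (SOME (U, l). unitary (dim_row A) U \<and>
       A = U * diag_c (dim_row A) l * adj U)"

definition mat_fun :: "(real \<Rightarrow> real) \<Rightarrow> complex mat \<Rightarrow> complex mat" where
  "mat_fun f A = (case spec_decomp A of (U, l) \<Rightarrow>
       U * diag_c (dim_row A) (\<lambda>i. f (l i)) * adj U)"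

definition operator_monotone :: "(real \<Rightarrow> real) \<Rightarrow> bool" where
  "operator_monotone f \<longleftrightarrow>
     (\<forall>n A B. pos_def n A \<and> pos_def n B \<and> loewner_le n A B \<longrightarrow>
        loewner_le n (mat_fun f A) (mat_fun f B))"

definition standard :: "(real \<Rightarrow> real) \<Rightarrow> bool" where
  "standard f \<longleftrightarrow> (\<forall>t>0. f t > 0) \<and> operator_monotone f \<and> f 1 = 1 \<and>
     (\<forall>t>0. f t = t * f (1 / t))"

definition mean :: "(real \<Rightarrow> real) \<Rightarrow> real \<Rightarrow> real \<Rightarrow> real" where
  "mean f a b = b * f (a / b)"

definition density :: "nat \<Rightarrow> complex mat \<Rightarrow> bool" where
  "density n D \<longleftrightarrow> pos_def n D \<and> mtrace D = 1"

text \<open>Superoperator phi(L_D R_D^{-1}) R_D-type map: in the eigenbasis of D it is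
  the Schur multiplier with kernel k(l_i,l_j). J^f_D uses k = M_f, its inverse
  uses k = 1/M_f.\<close>
definition schur_op :: "(real \<Rightarrow> real \<Rightarrow> real) \<Rightarrow> complex mat \<Rightarrow> complex mat \<Rightarrow> complex mat" where
  "schur_op k D B = (case spec_decomp D of (U, l) \<Rightarrow>
     U * mat (dim_row D) (dim_row D)
          (\<lambda>(i,j). complex_of_real (k (l i) (l j)) * (adj U * B * U) $$ (i,j)) * adj U)"

definition J_op :: "(real \<Rightarrow> real) \<Rightarrow> complex mat \<Rightarrow> complex mat \<Rightarrow> complex mat" where
  "J_op f D = schur_op (mean f) D"

definition J_inv :: "(real \<Rightarrow> real) \<Rightarrow> complex mat \<Rightarrow> complex mat \<Rightarrow> complex mat" where
  "J_inv f D = schur_op (\<lambda>a b. 1 / mean f a b) D"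

definition qFisher :: "(real \<Rightarrow> real) \<Rightarrow> complex mat \<Rightarrow> complex mat \<Rightarrow> complex mat \<Rightarrow> complex" where
  "qFisher f D A B = mtrace (adj A * J_inv f D B)"

definition qCov :: "(real \<Rightarrow> real) \<Rightarrow> complex mat \<Rightarrow> complex mat \<Rightarrow> complex mat \<Rightarrow> complex" where
  "qCov f D A B = mtrace (adj A * J_op f D B) - mtrace (D * adj A) * mtrace (D * B)"

definition commutator :: "complex mat \<Rightarrow> complex mat \<Rightarrow> complex mat" where
  "commutator X Y = X * Y - Y * X"

end

theory Submission
  imports Defs "Jordan_Normal_Form.Schur_Decomposition"
begin


lemma sp_def: "v \<bullet> w = (\<Sum>i<dim_vec w. v $ i * w $ i)"
  by (simp add: scalar_prod_def lessThan_atLeast0)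

lemma mult_entry:
  assumes "i < dim_row A" "j < dim_col B" "dim_col A = dim_row B"
  shows "(A * B) $$ (i,j) = (\<Sum>k<dim_col A. A $$ (i,k) * B $$ (k,j))"
  using assms by (simp add: sp_def lessThan_atLeast0)

lemma mult_vec_entry:
  assumes "i < dim_row A" "dim_col A = dim_vec v"
  shows "(A *\<^sub>v v) $ i = (\<Sum>k<dim_col A. A $$ (i,k) * v $ k)"
  using assms by (simp add: sp_def lessThan_atLeast0)

lemma adj_carrier[simp]: "dim_row (adj A) = dim_col A" "dim_col (adj A) = dim_row A"
  by (auto simp: adj_def)

lemma adj_carrier_mat[simp]: "A \<in> carrier_mat n m \<Longrightarrow> adj A \<in> carrier_mat m n"
  unfolding carrier_mat_def by simp

lemma adj_index[simp]: "i < dim_col A \<Longrightarrow> j < dim_row A \<Longrightarrow> adj A $$ (i,j) = cnj (A $$ (j,i))"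
  by (auto simp: adj_def)

lemma adj_adj[simp]: "adj (adj A) = A"
  by (rule eq_matI) auto

lemma adj_mult: assumes "A \<in> carrier_mat n k" "B \<in> carrier_mat k m"
  shows "adj (A * B) = adj B * adj A"
proof (rule eq_matI)
  fix i j assume ij: "i < dim_row (adj B * adj A)" "j < dim_col (adj B * adj A)"
  show "adj (A * B) $$ (i, j) = (adj B * adj A) $$ (i, j)"
    using assms ij by (simp add: sp_def mult.commute)
qed (use assms in auto)

lemma adj_minus: assumes "A \<in> carrier_mat n m" "B \<in> carrier_mat n m"
  shows "adj (A - B) = adj A - adj B"
  by (rule eq_matI) (use assms in auto)

lemma adj_one[simp]: "adj (1\<^sub>m n) = 1\<^sub>m n"
  by (rule eq_matI) auto

lemma mtrace_comm: assumes "A \<in> carrier_mat n m" "B \<in> carrier_mat m n"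
  shows "mtrace (A * B) = mtrace (B * A)"
  using assms unfolding mtrace_def
  by (simp add: sp_def, subst sum.swap, simp add: mult.commute)

lemma unitary_right: assumes "unitary n U" shows "U * adj U = 1\<^sub>m n"
  using assms mat_mult_left_right_inverse[of "adj U" n U] unfolding unitary_def by auto

lemma unitary_carrier: "unitary n U \<Longrightarrow> U \<in> carrier_mat n n"
  by (auto simp: unitary_def)

lemma diag_c_carrier[simp]: "diag_c n l \<in> carrier_mat n n"
  by (auto simp: diag_c_def)

lemma diag_c_dims[simp]: "dim_row (diag_c n l) = n" "dim_col (diag_c n l) = n"
  by (auto simp: diag_c_def)

lemma diag_c_index[simp]: "i < n \<Longrightarrow> j < n \<Longrightarrow> diag_c n l $$ (i,j) = (if i = j then complex_of_real (l i) else 0)"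
  by (auto simp: diag_c_def)

lemma adj_diag_c[simp]: "adj (diag_c n l) = diag_c n l"
  by (rule eq_matI) auto

lemma diag_c_mult: "diag_c n a * diag_c n b = diag_c n (\<lambda>i. a i * b i)"
  by (rule eq_matI) (auto simp: sp_def if_distrib cong: if_cong)

lemma UDU_entry: assumes "X \<in> carrier_mat n n" "i < n" "j < n"
  shows "(X * diag_c n l * adj X) $$ (i,j) = (\<Sum>k<n. X $$ (i,k) * complex_of_real (l k) * cnj (X $$ (j,k)))"
  using assms by (simp add: sp_def sum_distrib_right if_distrib lessThan_atLeast0 cong: if_cong)

lemma det_diag_c: "det (diag_c n l) = complex_of_real (\<Prod>i<n. l i)"
proof -
  have "det (diag_c n l) = prod_list (diag_mat (diag_c n l))"
    by (rule det_upper_triangular) (auto simp: upper_triangular_def)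
  also have "diag_mat (diag_c n l) = map (\<lambda>i. complex_of_real (l i)) [0..<n]"
    by (auto simp: diag_mat_def intro: nth_equalityI)
  finally show ?thesis
    by (simp add: prod.distinct_set_conv_list[symmetric] lessThan_atLeast0)
qed

lemma csprod_def: "dim_vec y = dim_vec x \<Longrightarrow> x \<bullet>c y = (\<Sum>k<dim_vec x. x $ k * cnj (y $ k))"
  by (simp add: sp_def)

lemma csprod_smult: assumes d: "dim_vec y = dim_vec x"
  shows "(a \<cdot>\<^sub>v x) \<bullet>c (b \<cdot>\<^sub>v y) = a * cnj b * (x \<bullet>c y)"
proof -
  have "(a \<cdot>\<^sub>v x) \<bullet>c (b \<cdot>\<^sub>v y) = (\<Sum>k<dim_vec x. (a * x $ k) * cnj (b * y $ k))"
    using d by (subst csprod_def) auto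
  also have "\<dots> = (\<Sum>k<dim_vec x. (a * cnj b) * (x $ k * cnj (y $ k)))"
    by (rule sum.cong) auto
  also have "\<dots> = a * cnj b * (x \<bullet>c y)"
    using d by (simp add: csprod_def sum_distrib_left)
  finally show ?thesis .
qed

lemma csprod_self_real: assumes "x \<in> carrier_vec n" "x \<noteq> 0\<^sub>v n"
  shows "x \<bullet>c x = complex_of_real (Re (x \<bullet>c x))" "Re (x \<bullet>c x) > 0"
proof -
  from conjugate_square_greater_0_vec[OF assms(1)] assms
  have "0 < x \<bullet>c x" by auto
  then show "x \<bullet>c x = complex_of_real (Re (x \<bullet>c x))" "Re (x \<bullet>c x) > 0"
    by (auto simp: less_complex_def complex_eq_iff)
qed




lemma sq_mult: "A \<in> carrier_mat n n \<Longrightarrow> B \<in> carrier_mat n n \<Longrightarrow> A * B \<in> carrier_mat n n"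
  by auto

lemma hermitian_carrier: "hermitian n A \<Longrightarrow> A \<in> carrier_mat n n"
  by (simp add: hermitian_def)

lemma hermitian_entry: assumes "hermitian n A" "i < n" "j < n"
  shows "A $$ (i,j) = cnj (A $$ (j,i))"
proof -
  have "A $$ (i,j) = adj A $$ (i,j)" using assms by (simp add: hermitian_def)
  also have "\<dots> = cnj (A $$ (j,i))" using assms by (intro adj_index) (auto simp: hermitian_def)
  finally show ?thesis .
qed

lemma triple_entry: assumes "W \<in> carrier_mat n n" "A \<in> carrier_mat n n" "i < n" "j < n"
  shows "(adj W * A * W) $$ (i,j) = (\<Sum>p<n. cnj (W $$ (p,i)) * (\<Sum>q<n. A $$ (p,q) * W $$ (q,j)))"
proof -
  have "(adj W * A * W) $$ (i,j) = (\<Sum>q<n. (adj W * A) $$ (i,q) * W $$ (q,j))"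
    by (subst mult_entry) (use assms in auto)
  also have "\<dots> = (\<Sum>q<n. (\<Sum>p<n. cnj (W$$(p,i)) * A$$(p,q)) * W$$(q,j))"
    by (rule sum.cong[OF refl], subst mult_entry) (use assms in auto)
  also have "\<dots> = (\<Sum>p<n. cnj (W $$ (p,i)) * (\<Sum>q<n. A $$ (p,q) * W $$ (q,j)))"
    by (simp add: sum_distrib_left sum_distrib_right mult.assoc) (rule sum.swap)
  finally show ?thesis .
qed

lemma spectral_exists:
  assumes "hermitian n A"
  shows "\<exists>U l. unitary n U \<and> A = U * diag_c n l * adj U"
  using assms
proof (induction n arbitrary: A)
  case 0
  then have A: "A \<in> carrier_mat 0 0" by (simp add: hermitian_def)
  show ?case
    by (rule exI[of _ "1\<^sub>m 0"], rule exI[of _ "\<lambda>_. 0"])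
       (use A in \<open>auto simp: unitary_def intro!: eq_matI\<close>)
next
  case (Suc k)
  define n where "n = Suc k"
  have A: "A \<in> carrier_mat n n" using Suc.prems by (simp add: hermitian_def n_def)
  have hA: "adj A = A" using Suc.prems by (simp add: hermitian_def)
  obtain as where cp: "char_poly A = (\<Prod>a\<leftarrow>as. [:- a, 1:])" and las: "length as = n"
    using char_poly_factorized[OF A] by auto
  then obtain e rest where as: "as = e # rest" unfolding n_def by (cases as) auto
  have "poly (char_poly A) e = 0" unfolding cp as by simp
  then have ev: "eigenvalue A e" using eigenvalue_root_char_poly[OF A] by simp
  define v0 where "v0 = find_eigenvector A e"
  have "eigenvector A v0 e" using find_eigenvector[OF A ev] unfolding v0_def .
  then have v0: "v0 \<in> carrier_vec n" "v0 \<noteq> 0\<^sub>v n" "A *\<^sub>v v0 = e \<cdot>\<^sub>v v0"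
    using A unfolding eigenvector_def by auto
  define r where "r = Re (v0 \<bullet>c v0)"
  have r: "r > 0" "v0 \<bullet>c v0 = complex_of_real r"
    using csprod_self_real[OF v0(1,2)] unfolding r_def by auto
  define v where "v = complex_of_real (1 / sqrt r) \<cdot>\<^sub>v v0"
  have v: "v \<in> carrier_vec n" using v0 unfolding v_def by auto
  have vv: "v \<bullet>c v = 1"
    unfolding v_def using v0 r
    by (subst csprod_smult) (auto simp: field_simps simp flip: of_real_mult)
  have vnz: "v \<noteq> 0\<^sub>v n" using vv v by auto
  have Av: "A *\<^sub>v v = e \<cdot>\<^sub>v v"
    unfolding v_def using v0 A by (simp add: mult_mat_vec smult_smult_assoc mult.commute)
  interpret cof_vec_space n "TYPE(complex)" .
  define b where "b = basis_completion v"
  note bc = basis_completion[OF v vnz, folded b_def]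
  define ws where "ws = gram_schmidt n b"
  note gs = gram_schmidt_result[OF bc(2) bc(4) bc(5) ws_def]
  from bc(6,7) obtain vs where bv: "b = v # vs" unfolding n_def by (cases b) auto
  have hdws: "hd ws = v" unfolding ws_def bv using v by simp
  have lws: "length ws = n" using gs bc by simp
  have ws0: "ws ! 0 = v" using hdws lws unfolding n_def by (cases ws) auto
  have wsc: "\<And>i. i < n \<Longrightarrow> ws ! i \<in> carrier_vec n" using gs lws by auto
  have wsnz: "\<And>i. i < n \<Longrightarrow> ws ! i \<noteq> 0\<^sub>v n"
  proof -
    fix i assume i: "i < n"
    have "ws ! i \<bullet>c ws ! i \<noteq> 0" using gs(2) i lws by (auto simp: corthogonal_def)
    then show "ws ! i \<noteq> 0\<^sub>v n" by auto
  qed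
  define nr where "nr = (\<lambda>i. 1 / sqrt (Re (ws ! i \<bullet>c ws ! i)))"
  define W where "W = mat n n (\<lambda>(p,i). complex_of_real (nr i) * (ws ! i) $ p)"
  have W: "W \<in> carrier_mat n n" unfolding W_def by auto
  have ortho: "(\<Sum>p<n. cnj (W $$ (p,i)) * W $$ (p,j)) = (if i = j then 1 else 0)"
    if ij: "i < n" "j < n" for i j
  proof -
    have "(\<Sum>p<n. cnj (W $$ (p,i)) * W $$ (p,j)) =
       complex_of_real (nr i * nr j) * (ws ! j \<bullet>c ws ! i)"
      using ij wsc[OF ij(1)] wsc[OF ij(2)]
      by (simp add: W_def csprod_def sum_distrib_left mult_ac)
    also have "\<dots> = (if i = j then 1 else 0)"
    proof (cases "i = j")
      case True
      define r where "r = Re (ws ! i \<bullet>c ws ! i)"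
      have r: "r > 0" "ws ! i \<bullet>c ws ! i = complex_of_real r"
        using csprod_self_real[OF wsc[OF ij(1)] wsnz[OF ij(1)]] unfolding r_def by auto
      have "nr i * nr j * r = 1" using True r unfolding nr_def r_def[symmetric]
        by (simp add: field_simps)
      then have "complex_of_real (nr i * nr j) * complex_of_real r = 1"
        by (simp flip: of_real_mult)
      then show ?thesis using True r by simp
    next
      case False
      then have "ws ! j \<bullet>c ws ! i = 0" using gs(2) ij lws by (auto simp: corthogonal_def)
      then show ?thesis using False by simp
    qed
    finally show ?thesis .
  qed
  have WW: "adj W * W = 1\<^sub>m n"
    by (rule eq_matI) (use W ortho in \<open>auto simp: sp_def\<close>)
  have WW': "W * adj W = 1\<^sub>m n" using unitary_right[of n W] W WW by (simp add: unitary_def)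
  have nr0: "nr 0 = 1" using vv ws0 unfolding nr_def by simp
  have Wcol0: "W $$ (q,0) = v $ q" if "q < n" for q
    using that nr0 ws0 unfolding W_def n_def by simp
  define A' where "A' = adj W * A * W"
  have A': "A' \<in> carrier_mat n n" unfolding A'_def using W A by auto
  have hA': "adj A' = A'"
  proof -
    have "adj A' = adj W * adj (adj W * A)" unfolding A'_def
      by (rule adj_mult[of _ n n _ n]) (use W A in auto)
    also have "adj (adj W * A) = adj A * W"
      by (subst adj_mult[of _ n n _ n]) (use W A in auto)
    finally show ?thesis unfolding A'_def using W A hA
      by (simp add: assoc_mult_mat[of _ n n _ n _ n] sq_mult)
  qed
  have A'col: "A' $$ (i,0) = (if i = 0 then e else 0)" if i: "i < n" for i
  proof -
    have "A' $$ (i,0) = (\<Sum>p<n. cnj (W $$ (p,i)) * (\<Sum>q<n. A $$ (p,q) * W $$ (q,0)))"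
      unfolding A'_def using triple_entry[OF W A i] n_def by simp
    also have "\<dots> = (\<Sum>p<n. cnj (W $$ (p,i)) * (e * W $$ (p,0)))"
    proof (rule sum.cong[OF refl])
      fix p assume p: "p \<in> {..<n}"
      have "(\<Sum>q<n. A $$ (p,q) * W $$ (q,0)) = (A *\<^sub>v v) $ p"
        using p A v Wcol0 by (simp add: sp_def)
      also have "\<dots> = e * W $$ (p,0)" using Av p v Wcol0 by simp
      finally show "cnj (W $$ (p,i)) * (\<Sum>q<n. A $$ (p,q) * W $$ (q,0)) = cnj (W $$ (p,i)) * (e * W $$ (p,0))"
        by simp
    qed
    also have "\<dots> = e * (\<Sum>p<n. cnj (W $$ (p,i)) * W $$ (p,0))"
      by (simp add: sum_distrib_left mult_ac)
    also have "\<dots> = (if i = 0 then e else 0)" using ortho[OF i, of 0] n_def by simp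
    finally show ?thesis .
  qed
  have A'row: "A' $$ (0,j) = (if j = 0 then e else 0)" if j: "j < n" for j
  proof -
    have "A' $$ (0,j) = adj A' $$ (0,j)" using hA' by simp
    also have "\<dots> = cnj (A' $$ (j,0))" using j A' n_def by simp
    finally show ?thesis using A'col[OF j] hA' A'col[of 0] n_def by auto
  qed
  have ereal: "e = complex_of_real (Re e)"
  proof -
    have "A' $$ (0,0) = adj A' $$ (0,0)" using hA' by simp
    also have "\<dots> = cnj (A' $$ (0,0))" using A' n_def by simp
    finally have "e = cnj e" using A'col[of 0] n_def by simp
    then show ?thesis by (simp add: complex_eq_iff)
  qed
  define A3 where "A3 = mat k k (\<lambda>(i,j). A' $$ (Suc i, Suc j))"
  have hA3: "hermitian k A3"
    unfolding hermitian_def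
  proof
    show "A3 \<in> carrier_mat k k" unfolding A3_def by auto
    show "adj A3 = A3"
    proof (rule eq_matI)
      fix i j assume "i < dim_row A3" "j < dim_col A3"
      then have ij: "i < k" "j < k" unfolding A3_def by auto
      have "adj A3 $$ (i,j) = cnj (A' $$ (Suc j, Suc i))" using ij unfolding A3_def by simp
      also have "\<dots> = adj A' $$ (Suc i, Suc j)" using ij A' n_def by simp
      also have "\<dots> = A3 $$ (i,j)" using ij hA' unfolding A3_def by simp
      finally show "adj A3 $$ (i,j) = A3 $$ (i,j)" .
    qed (auto simp: A3_def)
  qed
  from Suc.IH[OF hA3] obtain U3 l3 where U3: "unitary k U3" and A3eq: "A3 = U3 * diag_c k l3 * adj U3"
    by auto
  have U3c: "U3 \<in> carrier_mat k k" using U3 by (simp add: unitary_def)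
  have U3U3: "adj U3 * U3 = 1\<^sub>m k" using U3 by (simp add: unitary_def)
  define B where "B = mat n n (\<lambda>(i,j). if i = 0 \<and> j = 0 then 1 else if i = 0 \<or> j = 0 then 0 else U3 $$ (i - 1, j - 1))"
  have B: "B \<in> carrier_mat n n" unfolding B_def by auto
  define l where "l = (\<lambda>i. if i = 0 then Re e else l3 (i - 1))"
  have BB: "adj B * B = 1\<^sub>m n"
  proof (rule eq_matI)
    fix i j assume "i < dim_row (1\<^sub>m n)" "j < dim_col (1\<^sub>m n)"
    then have ij: "i < Suc k" "j < Suc k" unfolding n_def by auto
    have "(adj B * B) $$ (i,j) = (\<Sum>p<Suc k. cnj (B $$ (p,i)) * B $$ (p,j))"
      using ij B by (simp add: sp_def n_def)
    also have "\<dots> = cnj (B $$ (0,i)) * B $$ (0,j) + (\<Sum>p<k. cnj (B $$ (Suc p,i)) * B $$ (Suc p,j))"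
      by (subst sum.lessThan_Suc_shift) simp
    also have "\<dots> = 1\<^sub>m n $$ (i,j)"
    proof (cases i)
      case 0
      then show ?thesis using ij by (cases j) (auto simp: B_def n_def)
    next
      case (Suc i')
      show ?thesis
      proof (cases j)
        case 0
        then show ?thesis using ij Suc by (auto simp: B_def n_def)
      next
        case (Suc j')
        have "(\<Sum>p<k. cnj (B $$ (Suc p,i)) * B $$ (Suc p,j)) = (adj U3 * U3) $$ (i',j')"
          using ij Suc \<open>i = Suc i'\<close> U3c by (simp add: sp_def B_def n_def)
        then show ?thesis using ij Suc \<open>i = Suc i'\<close> U3U3 by (simp add: B_def n_def)
      qed
    qed
    finally show "(adj B * B) $$ (i,j) = 1\<^sub>m n $$ (i,j)" .
  qed (use B in auto)
  have A'eq: "A' = B * diag_c n l * adj B"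
  proof (rule eq_matI)
    fix i j assume "i < dim_row (B * diag_c n l * adj B)" "j < dim_col (B * diag_c n l * adj B)"
    then have ij: "i < Suc k" "j < Suc k" using B unfolding n_def by auto
    have "(B * diag_c n l * adj B) $$ (i,j) = (\<Sum>p<Suc k. B $$ (i,p) * complex_of_real (l p) * cnj (B $$ (j,p)))"
      using UDU_entry[OF B, of i j l] ij n_def by simp
    also have "\<dots> = B $$ (i,0) * complex_of_real (l 0) * cnj (B $$ (j,0)) +
        (\<Sum>p<k. B $$ (i,Suc p) * complex_of_real (l (Suc p)) * cnj (B $$ (j,Suc p)))"
      by (subst sum.lessThan_Suc_shift) simp
    also have "\<dots> = A' $$ (i,j)"
    proof (cases i)
      case 0
      then show ?thesis using ij A'row[of j] ereal by (cases j) (auto simp: B_def n_def l_def)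
    next
      case (Suc i')
      show ?thesis
      proof (cases j)
        case 0
        then show ?thesis using ij Suc A'col[of i] by (auto simp: B_def n_def)
      next
        case (Suc j')
        have "(\<Sum>p<k. B $$ (i,Suc p) * complex_of_real (l (Suc p)) * cnj (B $$ (j,Suc p))) =
              (U3 * diag_c k l3 * adj U3) $$ (i',j')"
          using ij Suc \<open>i = Suc i'\<close> UDU_entry[OF U3c, of i' j' l3] by (simp add: B_def n_def l_def)
        also have "\<dots> = A' $$ (i,j)" using A3eq[symmetric] ij Suc \<open>i = Suc i'\<close> by (simp add: A3_def)
        finally show ?thesis using Suc \<open>i = Suc i'\<close> ij by (simp add: B_def n_def)
      qed
    qed
    finally show "A' $$ (i,j) = (B * diag_c n l * adj B) $$ (i,j)" by simp
  qed (use B A' in auto)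
  define U where "U = W * B"
  have Uc: "U \<in> carrier_mat n n" unfolding U_def using W B by auto
  have WWB: "adj W * (W * B) = B"
  proof -
    have "adj W * (W * B) = (adj W * W) * B"
      using W B by (simp add: assoc_mult_mat[of "adj W" n n W n B n])
    then show ?thesis using WW B by simp
  qed
  have "adj U * U = adj B * (adj W * (W * B))"
    unfolding U_def using W B by (simp add: adj_mult[OF W B] assoc_mult_mat[of _ n n _ n _ n] sq_mult)
  also have "\<dots> = 1\<^sub>m n" using WWB BB B by simp
  finally have uU: "unitary n U" using Uc by (simp add: unitary_def)
  have "A = (W * adj W) * A * (W * adj W)" using WW' A by simp
  also have "\<dots> = W * A' * adj W"
    unfolding A'_def using W A by (simp add: assoc_mult_mat[of _ n n _ n _ n] sq_mult)
  also have "\<dots> = U * diag_c n l * adj U"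
    unfolding A'eq U_def using W B by (simp add: adj_mult[OF W B] assoc_mult_mat[of _ n n _ n _ n] sq_mult)
  finally show ?case using uU unfolding n_def by blast
qed




lemma spec_decomp_prop:
  assumes "hermitian n A" "spec_decomp A = (U,l)"
  shows "unitary n U" "A = U * diag_c n l * adj U"
proof -
  have dr: "dim_row A = n" using hermitian_carrier[OF assms(1)] by (rule carrier_matD)
  define P where "P = (\<lambda>(U,l). unitary (dim_row A) U \<and> A = U * diag_c (dim_row A) l * adj U)"
  obtain U0 l0 where U0: "unitary n U0" "A = U0 * diag_c n l0 * adj U0"
    using spectral_exists[OF assms(1)] by blast
  have "P (U0, l0)" unfolding P_def prod.case dr using U0 by (rule conjI)
  then have ex: "\<exists>x. P x" by blast
  have "P (spec_decomp A)" unfolding spec_decomp_def P_def[symmetric] by (rule someI_ex[OF ex])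
  then have "P (U,l)" using assms(2) by simp
  then have "unitary (dim_row A) U \<and> A = U * diag_c (dim_row A) l * adj U"
    unfolding P_def by (simp only: prod.case)
  then show "unitary n U" "A = U * diag_c n l * adj U" unfolding dr by auto
qed

definition M1 :: "real \<Rightarrow> complex mat" where "M1 a = mat 1 1 (\<lambda>_. complex_of_real a)"

lemma M1_carrier[simp]: "M1 a \<in> carrier_mat 1 1" "dim_row (M1 a) = 1" "dim_col (M1 a) = 1"
  by (auto simp: M1_def)

lemma M1_index[simp]: "M1 a $$ (0,0) = complex_of_real a"
  by (simp add: M1_def)

lemma M1_hermitian: "hermitian 1 (M1 a)"
  unfolding hermitian_def by (auto simp: M1_def intro!: eq_matI)

lemma qform_M1: assumes "dim_vec v = 1" shows "qform (M1 a) v = complex_of_real (a * (cmod (v $ 0))^2)"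
proof -
  have "qform (M1 a) v = cnj (v $ 0) * (complex_of_real a * v $ 0)"
    using assms by (simp add: qform_def sp_def M1_def)
  also have "\<dots> = complex_of_real a * (cnj (v $ 0) * v $ 0)" by (simp add: mult_ac)
  also have "cnj (v $ 0) * v $ 0 = complex_of_real ((cmod (v $ 0))^2)"
    by (simp add: complex_norm_square mult.commute del: of_real_power)
  finally show ?thesis by simp
qed

lemma M1_pos_def: assumes "a > 0" shows "pos_def 1 (M1 a)"
  unfolding pos_def_def
proof (intro conjI ballI impI)
  show "hermitian 1 (M1 a)" by (rule M1_hermitian)
  fix v :: "complex vec" assume v: "v \<in> carrier_vec 1" "v \<noteq> 0\<^sub>v 1"
  have "v $ 0 \<noteq> 0"
  proof
    assume "v $ 0 = 0"
    then have "v = 0\<^sub>v 1" using v(1) by (intro eq_vecI) auto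
    then show False using v(2) by simp
  qed
  then show "0 < Re (qform (M1 a) v)" using v(1) assms by (simp add: qform_M1)
qed

lemma M1_minus: "M1 b - M1 a = M1 (b - a)"
  by (rule eq_matI) (auto simp: M1_def)

lemma M1_loewner: assumes "a \<le> b" shows "loewner_le 1 (M1 a) (M1 b)"
  unfolding loewner_le_def pos_semidef_def M1_minus
  using assms M1_hermitian[of a] M1_hermitian[of b] M1_hermitian[of "b-a"] by (auto simp: qform_M1)

lemma mat_fun_M1: "mat_fun f (M1 a) = M1 (f a)"
proof -
  obtain U l where sd: "spec_decomp (M1 a) = (U,l)" by (cases "spec_decomp (M1 a)") auto
  note sp = spec_decomp_prop[OF M1_hermitian sd]
  have Uc: "U \<in> carrier_mat 1 1" using sp(1) by (simp add: unitary_def)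
  have "(adj U * U) $$ (0,0) = 1" using sp(1) by (simp add: unitary_def)
  then have u: "cnj (U $$ (0,0)) * U $$ (0,0) = 1" using Uc by (simp add: sp_def)
  have "complex_of_real a = (U * diag_c 1 l * adj U) $$ (0,0)" using sp(2)
    by (metis M1_index)
  also have "\<dots> = U $$ (0,0) * complex_of_real (l 0) * cnj (U $$ (0,0))"
    using UDU_entry[OF Uc, of 0 0 l] by simp
  also have "\<dots> = complex_of_real (l 0)" using u by (simp add: mult_ac)
  finally have al: "a = l 0" by simp
  have "mat_fun f (M1 a) = U * diag_c 1 (\<lambda>i. f (l i)) * adj U"
    unfolding mat_fun_def sd by simp
  also have "\<dots> = M1 (f a)"
  proof (rule eq_matI)
    fix i j assume "i < dim_row (M1 (f a))" "j < dim_col (M1 (f a))"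
    then have ij: "i = 0" "j = 0" by auto
    have "(U * diag_c 1 (\<lambda>i. f (l i)) * adj U) $$ (0,0) = U $$ (0,0) * complex_of_real (f (l 0)) * cnj (U $$ (0,0))"
      using UDU_entry[OF Uc, of 0 0 "\<lambda>i. f (l i)"] by simp
    also have "\<dots> = complex_of_real (f a)" using u al by (simp add: mult_ac)
    finally show "(U * diag_c 1 (\<lambda>i. f (l i)) * adj U) $$ (i,j) = M1 (f a) $$ (i,j)" using ij by simp
  qed (use Uc in auto)
  finally show ?thesis .
qed

lemma opmono_mono: assumes "operator_monotone f" "0 < a" "a \<le> b" shows "f a \<le> f b"
proof -
  have "loewner_le 1 (mat_fun f (M1 a)) (mat_fun f (M1 b))"
    using assms unfolding operator_monotone_def
    by (meson M1_loewner M1_pos_def less_le_trans)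
  then have "pos_semidef 1 (M1 (f b - f a))" unfolding loewner_le_def mat_fun_M1 M1_minus by simp
  then have "0 \<le> Re (qform (M1 (f b - f a)) (vec 1 (\<lambda>_. 1)))" unfolding pos_semidef_def by auto
  then show ?thesis by (simp add: qform_M1)
qed

lemma standard_mono: "standard f \<Longrightarrow> 0 < a \<Longrightarrow> a \<le> b \<Longrightarrow> f a \<le> f b"
  using opmono_mono unfolding standard_def by blast

lemma strict_bound:
  assumes f: "standard f" and g: "standard g" and c: "c > 0"
    and fg: "\<forall>x>0. g x \<ge> c * (x - 1)^2 / f x"
    and x: "x > 0" "x \<noteq> 1"
  shows "g x * f x > c * (x - 1)^2"
proof -
  have fpos: "\<And>t. t > 0 \<Longrightarrow> f t > 0" and gpos: "\<And>t. t > 0 \<Longrightarrow> g t > 0"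
    using f g unfolding standard_def by blast+
  have fsym: "\<And>t. t > 0 \<Longrightarrow> f t = t * f (1/t)" and gsym: "\<And>t. t > 0 \<Longrightarrow> g t = t * g (1/t)"
    using f g unfolding standard_def by blast+
  have key: "g y * f y \<ge> c * (y - 1)^2" if "y > 0" for y
  proof -
    have "c * (y - 1)^2 / f y \<le> g y" using fg that by auto
    then show ?thesis using fpos[OF that] by (simp add: pos_divide_le_eq)
  qed
  have lt1: "g y * f y > c * (y - 1)^2" if y: "0 < y" "y < 1" for y
  proof -
    define z where "z = y / 2"
    have z: "0 < z" "z < y" using y unfolding z_def by auto
    have "g z \<le> g y" "f z \<le> f y" using standard_mono[OF g] standard_mono[OF f] z by auto
    then have "g z * f z \<le> g y * f y"
      using gpos[OF z(1)] fpos[OF z(1)] by (intro mult_mono) auto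
    moreover have "(1 - y)^2 < (1 - z)^2"
      by (rule power_strict_mono) (use z y in auto)
    then have "(y - 1)^2 < (z - 1)^2" by (simp add: power2_commute)
    then have "c * (y - 1)^2 < c * (z - 1)^2"
      using c by (rule mult_strict_left_mono)
    ultimately show ?thesis using key[OF z(1)] by linarith
  qed
  show ?thesis
  proof (cases "x < 1")
    case True then show ?thesis using lt1 x by auto
  next
    case False
    then have x1: "x > 1" using x by auto
    have ix: "0 < 1/x" "1/x < 1" using x1 by auto
    have "g (1/x) * f (1/x) > c * (1/x - 1)^2" using lt1[OF ix] .
    then have "x^2 * (g (1/x) * f (1/x)) > x^2 * (c * (1/x - 1)^2)"
      using x1 by (intro mult_strict_left_mono) auto
    moreover have "x^2 * (c * (1/x - 1)^2) = c * (x - 1)^2"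
    proof -
      have "x * (1/x - 1) = 1 - x" using x1 by (simp add: algebra_simps)
      then have "(x * (1/x - 1))^2 = (x - 1)^2" by (simp add: power2_commute)
      then show ?thesis by (simp add: power_mult_distrib)
    qed
    moreover have "x^2 * (g (1/x) * f (1/x)) = g x * f x"
      using fsym[OF x(1)] gsym[OF x(1)] by (simp add: power2_eq_square)
    ultimately show ?thesis by simp
  qed
qed

lemma mean_bound:
  assumes f: "standard f" and g: "standard g" and c: "c > 0"
    and fg: "\<forall>x>0. g x \<ge> c * (x - 1)^2 / f x"
    and ab: "a > 0" "b > 0" "a \<noteq> b"
  shows "mean g a b > c * (a - b)^2 / mean f a b"
proof -
  have fpos: "f (a/b) > 0" using f ab unfolding standard_def by (meson divide_pos_pos)
  have "g (a/b) * f (a/b) > c * (a/b - 1)^2"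
    using strict_bound[OF f g c fg, of "a/b"] ab by auto
  then have "g (a/b) > c * (a/b - 1)^2 / f (a/b)" using fpos by (simp add: field_simps)
  then have "b * g (a/b) > b * (c * (a/b - 1)^2 / f (a/b))" using ab by (intro mult_strict_left_mono) auto
  moreover have "b * (c * (a/b - 1)^2 / f (a/b)) = c * (a - b)^2 / (b * f (a/b))"
    using ab fpos by (simp add: field_simps power2_eq_square)
  ultimately show ?thesis unfolding mean_def by simp
qed

lemma mean_diag: assumes "standard g" shows "mean g a a = a"
proof -
  have "g 1 = 1" using assms unfolding standard_def by blast
  then show ?thesis unfolding mean_def by (cases "a = 0") auto
qed

lemma mean_pos: assumes "standard f" "a > 0" "b > 0" shows "mean f a b > 0"
proof -
  have "f (a/b) > 0" using assms unfolding standard_def by (meson divide_pos_pos)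
  then show ?thesis unfolding mean_def using assms by simp
qed




lemma conj_cancel: assumes U: "U \<in> carrier_mat n n" "adj U * U = 1\<^sub>m n" and X: "X \<in> carrier_mat n n"
  shows "adj U * (U * X * adj U) * U = X"
proof -
  have "adj U * (U * X * adj U) * U = (adj U * U) * X * (adj U * U)"
    using U(1) X by (simp add: assoc_mult_mat[of _ n n _ n _ n] sq_mult)
  also have "\<dots> = X" using U X by (simp add: U(2) carrier_matD[OF X] del: assoc_mult_mat)
  finally show ?thesis .
qed

lemma conj_cancel2: assumes U: "U \<in> carrier_mat n n" "U * adj U = 1\<^sub>m n" and X: "X \<in> carrier_mat n n"
  shows "U * (adj U * X * U) * adj U = X"
  using conj_cancel[of "adj U" n X] assms by simp

lemma mult3_carrier: "A \<in> carrier_mat n n \<Longrightarrow> B \<in> carrier_mat n n \<Longrightarrow> C \<in> carrier_mat n n \<Longrightarrow> A * B * C \<in> carrier_mat n n"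
  by auto

lemma det_mult3: assumes "A \<in> carrier_mat n n" "B \<in> carrier_mat n n" "C \<in> carrier_mat n n"
  shows "det (A * B * C) = det A * det B * det C"
  using assms by (simp add: det_mult[of _ n] sq_mult)

lemma qform_conj: assumes T: "T \<in> carrier_mat n n" and G: "G \<in> carrier_mat n n" and x: "x \<in> carrier_vec n"
  shows "qform (adj T * G * T) x = qform G (T *\<^sub>v x)"
proof -
  define y where "y = T *\<^sub>v x"
  define w where "w = G *\<^sub>v y"
  have y: "y \<in> carrier_vec n" and w: "w \<in> carrier_vec n" using T G x unfolding y_def w_def by auto
  have "(adj T * G * T) *\<^sub>v x = adj T *\<^sub>v w"
    unfolding w_def y_def using T G x
    by (simp add: assoc_mult_mat_vec[of _ n n _ n x] assoc_mult_mat_vec[of "adj T" n n G n] sq_mult)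
  then have "qform (adj T * G * T) x = (\<Sum>i<n. cnj (x $ i) * (\<Sum>k<n. cnj (T $$ (k,i)) * w $ k))"
    unfolding qform_def using x T w by (simp add: sp_def)
  also have "\<dots> = (\<Sum>k<n. (\<Sum>i<n. cnj (T $$ (k,i) * x $ i)) * w $ k)"
    by (simp add: sum_distrib_left sum_distrib_right mult_ac) (rule sum.swap)
  also have "\<dots> = (\<Sum>k<n. cnj (y $ k) * w $ k)"
    using T x unfolding y_def by (simp add: sp_def cnj_sum)
  also have "\<dots> = qform G y" unfolding qform_def w_def using y G by simp
  finally show ?thesis unfolding y_def .
qed

lemma qform_unit: assumes X: "X \<in> carrier_mat n n" and k: "k < n"
  shows "qform X (unit_vec n k) = X $$ (k,k)"
proof -
  have "qform X (unit_vec n k) = (\<Sum>i<n. (if i = k then 1 else 0) * (X *\<^sub>v unit_vec n k) $ i)"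
    unfolding qform_def by (rule sum.cong) (auto simp: k)
  also have "\<dots> = (\<Sum>i<n. if i = k then (X *\<^sub>v unit_vec n k) $ i else 0)" by (rule sum.cong) auto
  also have "\<dots> = (X *\<^sub>v unit_vec n k) $ k" using k by simp
  also have "\<dots> = X $$ (k,k)"
    using X k by (simp add: sp_def if_distrib cong: if_cong)
  finally show ?thesis .
qed

lemma inv_nonzero: fixes T S :: "complex mat" assumes T: "T \<in> carrier_mat n n" and S: "S \<in> carrier_mat n n" and inv: "S * T = 1\<^sub>m n"
  and x: "x \<in> carrier_vec n" "x \<noteq> 0\<^sub>v n"
  shows "T *\<^sub>v x \<noteq> 0\<^sub>v n"
proof
  assume "T *\<^sub>v x = 0\<^sub>v n"
  then have "S *\<^sub>v (T *\<^sub>v x) = 0\<^sub>v n" using S by (auto intro!: eq_vecI simp: sp_def)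
  moreover have "S *\<^sub>v (T *\<^sub>v x) = x"
  proof -
    have "S *\<^sub>v (T *\<^sub>v x) = (S * T) *\<^sub>v x"
      using assoc_mult_mat_vec[of S n n T n x] S T x by simp
    also have "\<dots> = x" unfolding inv using x(1) by (rule one_mult_mat_vec)
    finally show ?thesis .
  qed
  ultimately show False using x by simp
qed

lemma diag_c_one: "diag_c n (\<lambda>_. 1) = 1\<^sub>m n"
  by (rule eq_matI) auto

lemma prod_lt1: fixes mu :: "nat \<Rightarrow> real" assumes "\<forall>k<m. 0 \<le> (mu k :: real) \<and> mu k < 1" "m \<ge> 1"
  shows "(\<Prod>k<m. mu k) < 1"
proof -
  obtain m' where m: "m = Suc m'" using assms(2) by (cases m) auto
  have h: "\<forall>k<m'. 0 \<le> mu k \<and> mu k \<le> 1"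
  proof (intro allI impI)
    fix k assume "k < m'"
    then have "k < m" unfolding m by simp
    then show "0 \<le> mu k \<and> mu k \<le> 1" using assms(1) by auto
  qed
  have "(\<Prod>k<m. mu k) = (\<Prod>k<m'. mu k) * mu m'" unfolding m by simp
  moreover have "(\<Prod>k<m'. mu k) \<le> 1" "0 \<le> (\<Prod>k<m'. mu k)"
    using h by (auto intro!: prod_le_1 prod_nonneg)
  moreover have "0 \<le> mu m'" "mu m' < 1" using assms(1) unfolding m by auto
  ultimately have "(\<Prod>k<m'. mu k) * mu m' \<le> mu m'" "mu m' < 1" "(\<Prod>k<m. mu k) = (\<Prod>k<m'. mu k) * mu m'"
    by (auto intro: mult_left_le_one_le)
  then show ?thesis by linarith
qed

lemma hermitian_conj: assumes "hermitian n G" "T \<in> carrier_mat n n"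
  shows "hermitian n (adj T * G * T)"
proof -
  have G: "G \<in> carrier_mat n n" "adj G = G" using assms(1) unfolding hermitian_def by auto
  have "adj (adj T * G * T) = adj T * adj (adj T * G)"
    by (rule adj_mult[of _ n n _ n]) (use G assms(2) in auto)
  also have "adj (adj T * G) = adj G * T"
    by (subst adj_mult[of _ n n _ n]) (use G assms(2) in auto)
  finally have "adj (adj T * G * T) = adj T * G * T"
    using G assms(2) by (simp add: assoc_mult_mat[of _ n n _ n _ n])
  then show ?thesis unfolding hermitian_def using G assms(2) by auto
qed

lemma det_compare:
  assumes G1: "hermitian m G1" and G2: "hermitian m G2" and m: "m \<ge> 1"
    and pos: "\<forall>x\<in>carrier_vec m. x \<noteq> 0\<^sub>v m \<longrightarrow> 0 \<le> Re (qform G2 x) \<and> Re (qform G2 x) < Re (qform G1 x)"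
  shows "Im (det G1) = 0 \<and> Im (det G2) = 0 \<and> Re (det G2) < Re (det G1)"
proof -
  have G1c: "G1 \<in> carrier_mat m m" and G2c: "G2 \<in> carrier_mat m m"
    using G1 G2 by (auto simp: hermitian_carrier)
  obtain U lam where U: "unitary m U" and G1e: "G1 = U * diag_c m lam * adj U"
    using spectral_exists[OF G1] by blast
  have Uc: "U \<in> carrier_mat m m" and UU: "adj U * U = 1\<^sub>m m" and UU': "U * adj U = 1\<^sub>m m"
    using U unitary_right[OF U] by (auto simp: unitary_def)
  have Lam: "adj U * G1 * U = diag_c m lam"
    unfolding G1e using conj_cancel[OF Uc UU diag_c_carrier] .
  have nz: "\<And>V z. V \<in> carrier_mat m m \<Longrightarrow> adj V * V = 1\<^sub>m m \<Longrightarrow> z \<in> carrier_vec m \<Longrightarrow> z \<noteq> 0\<^sub>v m \<Longrightarrow> V *\<^sub>v z \<noteq> 0\<^sub>v m"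
    by (rule inv_nonzero) auto
  have lampos: "lam k > 0" if k: "k < m" for k
  proof -
    have "complex_of_real (lam k) = qform (adj U * G1 * U) (unit_vec m k)"
      unfolding Lam using qform_unit[OF diag_c_carrier k] k by simp
    also have "\<dots> = qform G1 (U *\<^sub>v unit_vec m k)" by (rule qform_conj[OF Uc G1c]) simp
    finally have "lam k = Re (qform G1 (U *\<^sub>v unit_vec m k))" by (metis Re_complex_of_real)
    moreover have "U *\<^sub>v unit_vec m k \<noteq> 0\<^sub>v m" using nz[OF Uc UU, of "unit_vec m k"] k by auto
    ultimately show ?thesis using pos Uc by (metis dual_order.strict_trans2 mult_mat_vec_carrier unit_vec_carrier)
  qed
  define s where "s = (\<lambda>k. 1 / sqrt (lam k))"
  define T where "T = U * diag_c m s"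
  have Tc: "T \<in> carrier_mat m m" unfolding T_def using Uc by auto
  have adjT: "adj T = diag_c m s * adj U" unfolding T_def by (simp add: adj_mult[OF Uc diag_c_carrier])
  have TGT: "adj T * G1 * T = 1\<^sub>m m"
  proof -
    have "adj T * G1 * T = diag_c m s * (adj U * G1 * U) * diag_c m s"
      unfolding T_def using Uc G1c by (simp add: adj_mult[OF Uc diag_c_carrier] assoc_mult_mat[of _ m m _ m _ m] sq_mult)
    also have "\<dots> = diag_c m (\<lambda>k. s k * lam k * s k)" unfolding Lam by (simp add: diag_c_mult)
    also have "\<dots> = diag_c m (\<lambda>_. 1)"
    proof (rule eq_matI)
      fix i j assume ij: "i < dim_row (diag_c m (\<lambda>_. 1::real))" "j < dim_col (diag_c m (\<lambda>_. 1::real))"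
      then have "lam i > 0" using lampos by simp
      then have "s i * lam i * s i = 1" unfolding s_def by (simp add: field_simps)
      then show "diag_c m (\<lambda>k. s k * lam k * s k) $$ (i,j) = diag_c m (\<lambda>_. 1) $$ (i,j)"
        using ij by (auto simp flip: of_real_mult)
    qed auto
    finally show ?thesis by (simp add: diag_c_one)
  qed
  have Tinv: "adj T * G1 * T \<in> carrier_mat m m" "(adj T * G1) * T = 1\<^sub>m m" using TGT by auto
  define H where "H = adj T * G2 * T"
  have Hh: "hermitian m H" unfolding H_def by (rule hermitian_conj[OF G2 Tc])
  have Hc: "H \<in> carrier_mat m m" using Hh by (simp add: hermitian_carrier)
  obtain V mu where V: "unitary m V" and He: "H = V * diag_c m mu * adj V"
    using spectral_exists[OF Hh] by blast
  have Vc: "V \<in> carrier_mat m m" and VV: "adj V * V = 1\<^sub>m m" and VV': "V * adj V = 1\<^sub>m m"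
    using V unitary_right[OF V] by (auto simp: unitary_def)
  have Mu: "adj V * H * V = diag_c m mu"
    unfolding He using conj_cancel[OF Vc VV diag_c_carrier] .
  have mub: "0 \<le> mu k \<and> mu k < 1" if k: "k < m" for k
  proof -
    define z where "z = V *\<^sub>v unit_vec m k"
    have zc: "z \<in> carrier_vec m" unfolding z_def using Vc by auto
    have znz: "z \<noteq> 0\<^sub>v m" unfolding z_def using nz[OF Vc VV, of "unit_vec m k"] k by auto
    define y where "y = T *\<^sub>v z"
    have yc: "y \<in> carrier_vec m" unfolding y_def using Tc zc by auto
    have ynz: "y \<noteq> 0\<^sub>v m" unfolding y_def
      by (rule inv_nonzero[of T m "adj T * G1"]) (use Tc G1c zc znz TGT in auto)
    have "complex_of_real (mu k) = qform (adj V * H * V) (unit_vec m k)"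
      unfolding Mu using qform_unit[OF diag_c_carrier k] k by simp
    also have "\<dots> = qform H z" unfolding z_def by (rule qform_conj[OF Vc Hc]) simp
    also have "\<dots> = qform G2 y" unfolding H_def y_def by (rule qform_conj[OF Tc G2c zc])
    finally have mu2: "mu k = Re (qform G2 y)" by (metis Re_complex_of_real)
    have "1 = qform (adj V * 1\<^sub>m m * V) (unit_vec m k)"
      using VV Vc qform_unit[of "1\<^sub>m m" m k] k by simp
    also have "\<dots> = qform (1\<^sub>m m) z" unfolding z_def by (rule qform_conj[OF Vc]) (use k in auto)
    also have "\<dots> = qform (adj T * G1 * T) z" unfolding TGT ..
    also have "\<dots> = qform G1 y" unfolding y_def by (rule qform_conj[OF Tc G1c zc])
    finally have "Re (qform G1 y) = 1" by (metis one_complex.sel(1))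
    then show ?thesis using pos yc ynz mu2 by auto
  qed
  have dG1: "det G1 = complex_of_real (\<Prod>k<m. lam k)"
  proof -
    have "det G1 = det U * det (diag_c m lam) * det (adj U)"
      unfolding G1e by (rule det_mult3) (use Uc in auto)
    also have "\<dots> = det (diag_c m lam) * (det (adj U) * det U)" by (simp add: mult_ac)
    also have "det (adj U) * det U = 1" using det_mult[of "adj U" m U] Uc UU by simp
    finally show ?thesis by (simp add: det_diag_c)
  qed
  have dH: "det H = complex_of_real (\<Prod>k<m. mu k)"
  proof -
    have "det H = det V * det (diag_c m mu) * det (adj V)"
      unfolding He by (rule det_mult3) (use Vc in auto)
    also have "\<dots> = det (diag_c m mu) * (det (adj V) * det V)" by (simp add: mult_ac)
    also have "det (adj V) * det V = 1" using det_mult[of "adj V" m V] Vc VV by simp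
    finally show ?thesis by (simp add: det_diag_c)
  qed
  define p where "p = det (adj T) * det T"
  have p1: "p * det G1 = 1"
  proof -
    have "det (adj T * G1 * T) = det (adj T) * det G1 * det T" by (rule det_mult3) (use Tc G1c in auto)
    then show ?thesis unfolding TGT p_def by (simp add: mult_ac)
  qed
  have p2: "p * det G2 = det H"
  proof -
    have "det (adj T * G2 * T) = det (adj T) * det G2 * det T" by (rule det_mult3) (use Tc G2c in auto)
    then show ?thesis unfolding H_def p_def by (simp add: mult_ac)
  qed
  have "det G2 = det G2 * (p * det G1)" using p1 by simp
  also have "\<dots> = (p * det G2) * det G1" by (simp add: mult_ac)
  finally have dG2: "det G2 = complex_of_real ((\<Prod>k<m. mu k) * (\<Prod>k<m. lam k))"
    unfolding p2 dH dG1 by simp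
  have "(\<Prod>k<m. mu k) < 1" using prod_lt1[of m mu] mub m by auto
  moreover have "(\<Prod>k<m. lam k) > 0" using lampos by (intro prod_pos) auto
  ultimately have "(\<Prod>k<m. mu k) * (\<Prod>k<m. lam k) < (\<Prod>k<m. lam k)" by simp
  then show ?thesis unfolding dG1 dG2 Re_complex_of_real Im_complex_of_real by simp
qed




definition gram :: "nat \<Rightarrow> 'k set \<Rightarrow> ('k \<Rightarrow> real) \<Rightarrow> (nat \<Rightarrow> 'k \<Rightarrow> complex) \<Rightarrow> complex mat" where
  "gram m K w v = mat m m (\<lambda>(i,j). \<Sum>k\<in>K. complex_of_real (w k) * cnj (v i k) * v j k)"

lemma gram_carrier: "gram m K w v \<in> carrier_mat m m"
  by (simp add: gram_def)

lemma gram_hermitian: "hermitian m (gram m K w v)"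
  unfolding hermitian_def
proof
  show "gram m K w v \<in> carrier_mat m m" by (rule gram_carrier)
  show "adj (gram m K w v) = gram m K w v"
    by (rule eq_matI) (auto simp: gram_def cnj_sum mult_ac)
qed

lemma sum3_swap: "(\<Sum>i\<in>A. \<Sum>j\<in>B. \<Sum>k\<in>C. F i j k) = (\<Sum>k\<in>C. \<Sum>i\<in>A. \<Sum>j\<in>B. F i j k)"
proof -
  have "(\<Sum>i\<in>A. \<Sum>j\<in>B. \<Sum>k\<in>C. F i j k) = (\<Sum>i\<in>A. \<Sum>k\<in>C. \<Sum>j\<in>B. F i j k)"
    by (rule sum.cong[OF refl]) (rule sum.swap)
  also have "\<dots> = (\<Sum>k\<in>C. \<Sum>i\<in>A. \<Sum>j\<in>B. F i j k)" by (rule sum.swap)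
  finally show ?thesis .
qed

lemma gram_qform:
  assumes x: "x \<in> carrier_vec m"
  shows "qform (gram m K w v) x = complex_of_real (\<Sum>k\<in>K. w k * (cmod (\<Sum>i<m. x $ i * v i k))^2)"
proof -
  have "qform (gram m K w v) x = (\<Sum>i<m. cnj (x $ i) * (\<Sum>j<m. (\<Sum>k\<in>K. complex_of_real (w k) * cnj (v i k) * v j k) * x $ j))"
    unfolding qform_def using x by (simp add: gram_def sp_def)
  also have "\<dots> = (\<Sum>i<m. \<Sum>j<m. \<Sum>k\<in>K. complex_of_real (w k) * (cnj (x $ i * v i k) * (x $ j * v j k)))"
    by (simp add: sum_distrib_left sum_distrib_right mult_ac)
  also have "\<dots> = (\<Sum>k\<in>K. \<Sum>i<m. \<Sum>j<m. complex_of_real (w k) * (cnj (x $ i * v i k) * (x $ j * v j k)))"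
    by (rule sum3_swap)
  also have "\<dots> = (\<Sum>k\<in>K. complex_of_real (w k) * (cnj (\<Sum>i<m. x $ i * v i k) * (\<Sum>j<m. x $ j * v j k)))"
    by (simp add: sum_distrib_left sum_distrib_right cnj_sum) (rule sum.cong[OF refl], rule sum.swap)
  also have "\<dots> = (\<Sum>k\<in>K. complex_of_real (w k * (cmod (\<Sum>i<m. x $ i * v i k))^2))"
    by (rule sum.cong[OF refl]) (simp add: complex_norm_square mult.commute del: of_real_power)
  finally show ?thesis by simp
qed

lemma gram_kernel:
  assumes a: "\<forall>k\<in>K. (\<Sum>i<m. a i * v i k) = 0"
  shows "gram m K w v *\<^sub>v vec m a = 0\<^sub>v m"
proof (rule eq_vecI)
  fix i assume "i < dim_vec (0\<^sub>v m :: complex vec)"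
  then have i: "i < m" by simp
  have "(gram m K w v *\<^sub>v vec m a) $ i = (\<Sum>j<m. (\<Sum>k\<in>K. complex_of_real (w k) * cnj (v i k) * v j k) * a j)"
    using i by (simp add: gram_def sp_def)
  also have "\<dots> = (\<Sum>k\<in>K. complex_of_real (w k) * cnj (v i k) * (\<Sum>j<m. a j * v j k))"
    by (simp add: sum_distrib_left sum_distrib_right mult_ac) (rule sum.swap)
  also have "\<dots> = 0" using a by simp
  finally show "(gram m K w v *\<^sub>v vec m a) $ i = 0\<^sub>v m $ i" using i by simp
qed (simp add: gram_def)

lemma gram_det:
  fixes K :: "'k set" and w1 w2 :: "'k \<Rightarrow> real" and v :: "nat \<Rightarrow> 'k \<Rightarrow> complex"
  assumes K: "finite K" and w: "\<forall>k\<in>K. 0 \<le> w2 k \<and> w2 k < w1 k" and m: "m \<ge> 1"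
  defines "dep \<equiv> \<exists>a. (\<exists>i<m. a i \<noteq> 0) \<and> (\<forall>k\<in>K. (\<Sum>i<m. a i * v i k) = 0)"
  shows "det (gram m K w2 v) \<le> det (gram m K w1 v) \<and>
         (det (gram m K w1 v) = det (gram m K w2 v) \<longleftrightarrow> dep) \<and>
         (dep \<longrightarrow> det (gram m K w1 v) = 0 \<and> det (gram m K w2 v) = 0)"
proof (cases dep)
  case True
  then obtain a where a: "\<exists>i<m. a i \<noteq> 0" "\<forall>k\<in>K. (\<Sum>i<m. a i * v i k) = 0"
    unfolding dep_def by blast
  have vnz: "vec m a \<noteq> 0\<^sub>v m"
  proof
    assume "vec m a = 0\<^sub>v m"
    then have "\<forall>i<m. a i = 0" by (metis index_vec index_zero_vec(1))
    then show False using a(1) by blast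
  qed
  have z: "det (gram m K w v) = 0" for w
    using det_0_iff_vec_prod_zero[OF gram_carrier[of m K w v]] vnz gram_kernel[OF a(2)] vec_carrier[of m a] by blast
  show ?thesis using True z by simp
next
  case False
  have pos: "\<forall>x\<in>carrier_vec m. x \<noteq> 0\<^sub>v m \<longrightarrow> 0 \<le> Re (qform (gram m K w2 v) x) \<and>
      Re (qform (gram m K w2 v) x) < Re (qform (gram m K w1 v) x)"
  proof (intro ballI impI)
    fix x :: "complex vec" assume x: "x \<in> carrier_vec m" "x \<noteq> 0\<^sub>v m"
    define u where "u = (\<lambda>k. (cmod (\<Sum>i<m. x $ i * v i k))^2)"
    obtain k where k: "k \<in> K" "(\<Sum>i<m. x $ i * v i k) \<noteq> 0"
    proof (rule ccontr)
      assume "\<not> thesis"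
      then have "\<forall>k\<in>K. (\<Sum>i<m. x $ i * v i k) = 0" using that by blast
      moreover have "\<exists>i<m. x $ i \<noteq> 0"
      proof (rule ccontr)
        assume "\<not> (\<exists>i<m. x $ i \<noteq> 0)"
        then have "x = 0\<^sub>v m" using x(1) by (intro eq_vecI) auto
        then show False using x(2) by simp
      qed
      ultimately have dep unfolding dep_def by blast
      then show False using False by simp
    qed
    have "(\<Sum>k\<in>K. w2 k * u k) < (\<Sum>k\<in>K. w1 k * u k)"
    proof (rule sum_strict_mono_ex1[OF K])
      show "\<forall>k\<in>K. w2 k * u k \<le> w1 k * u k" using w unfolding u_def
        by (auto intro!: mult_right_mono)
      show "\<exists>k\<in>K. w2 k * u k < w1 k * u k" using k w unfolding u_def
        by (intro bexI[of _ k]) auto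
    qed
    moreover have "0 \<le> (\<Sum>k\<in>K. w2 k * u k)" using w unfolding u_def by (auto intro!: sum_nonneg)
    ultimately show "0 \<le> Re (qform (gram m K w2 v) x) \<and> Re (qform (gram m K w2 v) x) < Re (qform (gram m K w1 v) x)"
      unfolding gram_qform[OF x(1)] u_def by simp
  qed
  have "Im (det (gram m K w1 v)) = 0 \<and> Im (det (gram m K w2 v)) = 0 \<and>
        Re (det (gram m K w2 v)) < Re (det (gram m K w1 v))"
    by (rule det_compare[OF gram_hermitian gram_hermitian m pos])
  then show ?thesis using False by (auto simp: less_eq_complex_def complex_eq_iff)
qed




lemma trace_conj: assumes U: "U \<in> carrier_mat n n" and Y: "Y \<in> carrier_mat n n" and K: "K \<in> carrier_mat n n"
  shows "mtrace (Y * (U * K * adj U)) = (\<Sum>r<n. \<Sum>s<n. (adj U * Y * U) $$ (r,s) * K $$ (s,r))"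
proof -
  have "Y * (U * K * adj U) = (Y * U * K) * adj U"
    using U Y K by (simp add: assoc_mult_mat[of _ n n _ n _ n] sq_mult)
  then have "mtrace (Y * (U * K * adj U)) = mtrace (adj U * (Y * U * K))"
    using mtrace_comm[of "Y * U * K" n n "adj U"] U Y K by (simp add: sq_mult)
  also have "adj U * (Y * U * K) = (adj U * Y * U) * K"
    using U Y K by (simp add: assoc_mult_mat[of _ n n _ n _ n] sq_mult)
  also have "mtrace ((adj U * Y * U) * K) = (\<Sum>r<n. \<Sum>s<n. (adj U * Y * U) $$ (r,s) * K $$ (s,r))"
    unfolding mtrace_def using U Y K by (simp add: sp_def)
  finally show ?thesis .
qed

lemma adj_conj: assumes U: "U \<in> carrier_mat n n" and X: "X \<in> carrier_mat n n"
  shows "adj U * adj X * U = adj (adj U * X * U)"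
proof -
  have "adj (adj U * X * U) = adj U * adj (adj U * X)"
    by (rule adj_mult[of _ n n _ n]) (use U X in auto)
  also have "adj (adj U * X) = adj X * U"
    by (subst adj_mult[of _ n n _ n]) (use U X in auto)
  finally show ?thesis using U X by (simp add: assoc_mult_mat[of _ n n _ n _ n])
qed

lemma adj_conj_entry: assumes U: "U \<in> carrier_mat n n" and X: "X \<in> carrier_mat n n" and rs: "r < n" "s < n"
  shows "(adj U * adj X * U) $$ (r,s) = cnj ((adj U * X * U) $$ (s,r))"
  unfolding adj_conj[OF U X] using rs U X by simp

lemma conj_shift: assumes U: "U \<in> carrier_mat n n" "adj U * U = 1\<^sub>m n" and Y: "Y \<in> carrier_mat n n"
  and pq: "p < n" "q < n"
  shows "(adj U * (Y - t \<cdot>\<^sub>m 1\<^sub>m n) * U) $$ (p,q) = (adj U * Y * U) $$ (p,q) - (if p = q then t else 0)"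
proof -
  have o: "(\<Sum>r<n. cnj (U $$ (r,p)) * U $$ (r,q)) = (if p = q then 1 else 0)"
    using arg_cong[OF U(2), of "\<lambda>M. M $$ (p,q)"] pq U(1) by (simp add: sp_def)
  have "(adj U * (Y - t \<cdot>\<^sub>m 1\<^sub>m n) * U) $$ (p,q) =
     (\<Sum>r<n. cnj (U $$ (r,p)) * (\<Sum>s<n. (Y - t \<cdot>\<^sub>m 1\<^sub>m n) $$ (r,s) * U $$ (s,q)))"
    by (rule triple_entry) (use U Y pq in auto)
  also have "\<dots> = (\<Sum>r<n. cnj (U $$ (r,p)) * ((\<Sum>s<n. Y $$ (r,s) * U $$ (s,q)) - t * U $$ (r,q)))"
  proof (rule sum.cong[OF refl])
    fix r assume r: "r \<in> {..<n}"
    have "(\<Sum>s<n. (Y - t \<cdot>\<^sub>m 1\<^sub>m n) $$ (r,s) * U $$ (s,q)) =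
        (\<Sum>s<n. Y $$ (r,s) * U $$ (s,q) - (if r = s then t * U $$ (s,q) else 0))"
      by (rule sum.cong[OF refl]) (use r Y in \<open>auto simp: algebra_simps\<close>)
    also have "\<dots> = (\<Sum>s<n. Y $$ (r,s) * U $$ (s,q)) - t * U $$ (r,q)"
      using r by (simp add: sum_subtractf)
    finally show "cnj (U $$ (r,p)) * (\<Sum>s<n. (Y - t \<cdot>\<^sub>m 1\<^sub>m n) $$ (r,s) * U $$ (s,q)) =
        cnj (U $$ (r,p)) * ((\<Sum>s<n. Y $$ (r,s) * U $$ (s,q)) - t * U $$ (r,q))" by simp
  qed
  also have "\<dots> = (\<Sum>r<n. cnj (U $$ (r,p)) * (\<Sum>s<n. Y $$ (r,s) * U $$ (s,q))) - t * (\<Sum>r<n. cnj (U $$ (r,p)) * U $$ (r,q))"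
    by (simp add: right_diff_distrib sum_subtractf sum_distrib_left mult_ac)
  also have "(\<Sum>r<n. cnj (U $$ (r,p)) * (\<Sum>s<n. Y $$ (r,s) * U $$ (s,q))) = (adj U * Y * U) $$ (p,q)"
    by (rule triple_entry[symmetric]) (use U Y pq in auto)
  finally show ?thesis unfolding o by simp
qed

lemma diag_left: assumes M: "M \<in> carrier_mat n n" and pq: "p < n" "q < n"
  shows "(diag_c n l * M) $$ (p,q) = complex_of_real (l p) * M $$ (p,q)"
proof -
  have "(diag_c n l * M) $$ (p,q) = (\<Sum>k<n. diag_c n l $$ (p,k) * M $$ (k,q))"
    by (subst mult_entry) (use M pq in auto)
  also have "\<dots> = (\<Sum>k<n. if k = p then complex_of_real (l p) * M $$ (p,q) else 0)"
    by (rule sum.cong[OF refl]) (use pq in auto)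
  finally show ?thesis using pq by simp
qed

lemma diag_right: assumes M: "M \<in> carrier_mat n n" and pq: "p < n" "q < n"
  shows "(M * diag_c n l) $$ (p,q) = M $$ (p,q) * complex_of_real (l q)"
proof -
  have "(M * diag_c n l) $$ (p,q) = (\<Sum>k<n. M $$ (p,k) * diag_c n l $$ (k,q))"
    by (subst mult_entry) (use M pq in auto)
  also have "\<dots> = (\<Sum>k<n. if k = q then M $$ (p,q) * complex_of_real (l q) else 0)"
    by (rule sum.cong[OF refl]) (use pq in auto)
  finally show ?thesis using pq by simp
qed

lemma conj_comm: assumes U: "U \<in> carrier_mat n n" "adj U * U = 1\<^sub>m n" "U * adj U = 1\<^sub>m n"
  and De: "D = U * diag_c n l * adj U" and Y: "Y \<in> carrier_mat n n"
  and pq: "p < n" "q < n"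
  shows "(adj U * commutator D Y * U) $$ (p,q) = complex_of_real (l p - l q) * (adj U * Y * U) $$ (p,q)"
proof -
  define L where "L = diag_c n l"
  have L: "L \<in> carrier_mat n n" unfolding L_def by simp
  have Dc: "D \<in> carrier_mat n n" unfolding De using U(1) by auto
  have aD: "adj U * D = L * adj U"
  proof -
    have "adj U * D = (adj U * U) * L * adj U" unfolding De L_def[symmetric]
      using U(1) L by (simp add: assoc_mult_mat[of _ n n _ n _ n] sq_mult)
    then show ?thesis using U(2) L by simp
  qed
  have DU: "D * U = U * L"
  proof -
    have "D * U = U * L * (adj U * U)" unfolding De L_def[symmetric]
      using U(1) L by (simp add: assoc_mult_mat[of _ n n _ n _ n] sq_mult)
    then show ?thesis using U(2) U(1) L by simp
  qed
  have e1: "adj U * (D * Y) * U = L * (adj U * Y * U)"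
  proof -
    have "adj U * (D * Y) * U = (adj U * D) * (Y * U)"
      using U(1) Dc Y by (simp add: assoc_mult_mat[of _ n n _ n _ n] sq_mult)
    also have "\<dots> = L * (adj U * Y * U)" unfolding aD
      using U(1) L Y by (simp add: assoc_mult_mat[of _ n n _ n _ n] sq_mult)
    finally show ?thesis .
  qed
  have e2: "adj U * (Y * D) * U = (adj U * Y * U) * L"
  proof -
    have "adj U * (Y * D) * U = (adj U * Y) * (D * U)"
      using U(1) Dc Y by (simp add: assoc_mult_mat[of _ n n _ n _ n] sq_mult)
    also have "\<dots> = (adj U * Y * U) * L" unfolding DU
      using U(1) L Y by (simp add: assoc_mult_mat[of _ n n _ n _ n] sq_mult)
    finally show ?thesis .
  qed
  have c1: "adj U \<in> carrier_mat n n" "D * Y \<in> carrier_mat n n" "Y * D \<in> carrier_mat n n"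
    using U(1) Dc Y by auto
  have "adj U * commutator D Y = adj U * (D * Y) - adj U * (Y * D)"
    unfolding commutator_def by (rule mult_minus_distrib_mat[OF c1])
  then have "adj U * commutator D Y * U = (adj U * (D * Y) - adj U * (Y * D)) * U" by simp
  also have "\<dots> = adj U * (D * Y) * U - adj U * (Y * D) * U"
    by (rule minus_mult_distrib_mat[of _ n n]) (use c1 U(1) in \<open>auto simp: sq_mult\<close>)
  finally have "adj U * commutator D Y * U = adj U * (D * Y) * U - adj U * (Y * D) * U" .
  also have "\<dots> = L * (adj U * Y * U) - (adj U * Y * U) * L" unfolding e1 e2 ..
  finally have "(adj U * commutator D Y * U) $$ (p,q) = (L * (adj U * Y * U) - (adj U * Y * U) * L) $$ (p,q)" by simp
  also have "\<dots> = (L * (adj U * Y * U)) $$ (p,q) - ((adj U * Y * U) * L) $$ (p,q)"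
    by (rule index_minus_mat(1)) (use pq U(1) Y L in auto)
  also have "\<dots> = complex_of_real (l p) * (adj U * Y * U) $$ (p,q) - (adj U * Y * U) $$ (p,q) * complex_of_real (l q)"
    unfolding L_def using pq U(1) Y by (simp only: diag_left[of _ n] diag_right[of _ n] sq_mult adj_carrier_mat)
  also have "\<dots> = complex_of_real (l p - l q) * (adj U * Y * U) $$ (p,q)"
    by (simp add: algebra_simps)
  finally show ?thesis .
qed

lemma trace_D: assumes U: "U \<in> carrier_mat n n" and De: "D = U * diag_c n l * adj U" and Y: "Y \<in> carrier_mat n n"
  shows "mtrace (D * Y) = (\<Sum>r<n. complex_of_real (l r) * (adj U * Y * U) $$ (r,r))"
proof -
  have Dc: "D \<in> carrier_mat n n" unfolding De using U by auto
  have "mtrace (D * Y) = mtrace (Y * D)" by (rule mtrace_comm) (use Dc Y in auto)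
  also have "\<dots> = (\<Sum>r<n. \<Sum>s<n. (adj U * Y * U) $$ (r,s) * diag_c n l $$ (s,r))"
    unfolding De by (rule trace_conj[OF U Y diag_c_carrier])
  also have "\<dots> = (\<Sum>r<n. complex_of_real (l r) * (adj U * Y * U) $$ (r,r))"
    by (rule sum.cong[OF refl]) (simp add: if_distrib mult.commute cong: if_cong)
  finally show ?thesis .
qed

lemma schur_op_eq: assumes sd: "spec_decomp D = (U,l)" and dr: "dim_row D = n"
  shows "schur_op k D B = U * mat n n (\<lambda>(i,j). complex_of_real (k (l i) (l j)) * (adj U * B * U) $$ (i,j)) * adj U"
  unfolding schur_op_def sd dr by simp




lemma diag_pair_sum: fixes h :: "nat \<Rightarrow> complex" shows "(\<Sum>k\<in>{..<n}\<times>{..<n}. if fst k = snd k then h (fst k) else 0) = (\<Sum>p<n. h p)"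
proof -
  have "(\<Sum>k\<in>{..<n}\<times>{..<n}. if fst k = snd k then h (fst k) else 0) =
        (\<Sum>p<n. \<Sum>q<n. if p = q then h p else 0)"
    unfolding sum.cartesian_product' by simp
  also have "\<dots> = (\<Sum>p<n. h p)"
  proof (rule sum.cong[OF refl])
    fix p assume "p \<in> {..<n}"
    then show "(\<Sum>q<n. if p = q then h p else 0) = h p"
      using sum.delta'[of "{..<n}" p "\<lambda>_. h p"] by simp
  qed
  finally show ?thesis .
qed

lemma centered_sum:
  fixes c x y :: "nat \<times> nat \<Rightarrow> complex"
  shows "(\<Sum>k\<in>{..<n}\<times>{..<n}. c k * cnj (x k - (if fst k = snd k then a else 0)) * (y k - (if fst k = snd k then b else 0)))
  = (\<Sum>k\<in>{..<n}\<times>{..<n}. c k * cnj (x k) * y k) - cnj a * (\<Sum>p<n. c (p,p) * y (p,p))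
     - b * (\<Sum>p<n. c (p,p) * cnj (x (p,p))) + cnj a * b * (\<Sum>p<n. c (p,p))"
proof -
  have "(\<Sum>k\<in>{..<n}\<times>{..<n}. c k * cnj (x k - (if fst k = snd k then a else 0)) * (y k - (if fst k = snd k then b else 0)))
    = (\<Sum>k\<in>{..<n}\<times>{..<n}. c k * cnj (x k) * y k
        - (if fst k = snd k then cnj a * (c (fst k, fst k) * y (fst k, fst k)) else 0)
        - (if fst k = snd k then b * (c (fst k, fst k) * cnj (x (fst k, fst k))) else 0)
        + (if fst k = snd k then cnj a * b * c (fst k, fst k) else 0))"
  proof (rule sum.cong[OF refl])
    fix k :: "nat \<times> nat"
    obtain p q where k: "k = (p,q)" by (cases k)
    show "c k * cnj (x k - (if fst k = snd k then a else 0)) * (y k - (if fst k = snd k then b else 0)) =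
        c k * cnj (x k) * y k
        - (if fst k = snd k then cnj a * (c (fst k, fst k) * y (fst k, fst k)) else 0)
        - (if fst k = snd k then b * (c (fst k, fst k) * cnj (x (fst k, fst k))) else 0)
        + (if fst k = snd k then cnj a * b * c (fst k, fst k) else 0)"
      unfolding k by (cases "p = q") (auto simp: algebra_simps)
  qed
  also have "\<dots> = (\<Sum>k\<in>{..<n}\<times>{..<n}. c k * cnj (x k) * y k)
        - (\<Sum>k\<in>{..<n}\<times>{..<n}. if fst k = snd k then cnj a * (c (fst k, fst k) * y (fst k, fst k)) else 0)
        - (\<Sum>k\<in>{..<n}\<times>{..<n}. if fst k = snd k then b * (c (fst k, fst k) * cnj (x (fst k, fst k))) else 0)
        + (\<Sum>k\<in>{..<n}\<times>{..<n}. if fst k = snd k then cnj a * b * c (fst k, fst k) else 0)"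
    by (simp add: sum.distrib sum_subtractf)
  also have "\<dots> = (\<Sum>k\<in>{..<n}\<times>{..<n}. c k * cnj (x k) * y k) - cnj a * (\<Sum>p<n. c (p,p) * y (p,p))
     - b * (\<Sum>p<n. c (p,p) * cnj (x (p,p))) + cnj a * b * (\<Sum>p<n. c (p,p))"
    unfolding diag_pair_sum[of "\<lambda>p. cnj a * (c (p,p) * y (p,p))" n]
      diag_pair_sum[of "\<lambda>p. b * (c (p,p) * cnj (x (p,p)))"] diag_pair_sum[of "\<lambda>p. cnj a * b * c (p,p)" n]
    by (simp add: sum_distrib_left)
  finally show ?thesis .
qed

lemma lincomb_conj:
  assumes V: "V \<in> carrier_mat n n" and Z: "\<forall>i<m. Z i \<in> carrier_mat n n"
    and a: "\<forall>r<n. \<forall>s<n. (\<Sum>i<m. a i * Z i $$ (r,s)) = 0"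
  shows "\<forall>p<n. \<forall>q<n. (\<Sum>i<m. a i * (adj V * Z i * V) $$ (p,q)) = 0"
proof (intro allI impI)
  fix p q assume pq: "p < n" "q < n"
  have "(\<Sum>i<m. a i * (adj V * Z i * V) $$ (p,q)) =
        (\<Sum>i<m. a i * (\<Sum>r<n. cnj (V $$ (r,p)) * (\<Sum>s<n. Z i $$ (r,s) * V $$ (s,q))))"
    by (rule sum.cong[OF refl], subst triple_entry) (use V Z pq in auto)
  also have "\<dots> = (\<Sum>i<m. \<Sum>r<n. \<Sum>s<n. cnj (V $$ (r,p)) * (a i * Z i $$ (r,s)) * V $$ (s,q))"
    by (simp add: sum_distrib_left sum_distrib_right mult_ac)
  also have "\<dots> = (\<Sum>r<n. \<Sum>i<m. \<Sum>s<n. cnj (V $$ (r,p)) * (a i * Z i $$ (r,s)) * V $$ (s,q))"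
    by (rule sum.swap)
  also have "\<dots> = (\<Sum>r<n. \<Sum>s<n. \<Sum>i<m. cnj (V $$ (r,p)) * (a i * Z i $$ (r,s)) * V $$ (s,q))"
    by (rule sum.cong[OF refl], rule sum.swap)
  also have "\<dots> = (\<Sum>r<n. \<Sum>s<n. cnj (V $$ (r,p)) * (\<Sum>i<m. a i * Z i $$ (r,s)) * V $$ (s,q))"
    by (simp add: sum_distrib_left sum_distrib_right)
  also have "\<dots> = 0" using a by simp
  finally show "(\<Sum>i<m. a i * (adj V * Z i * V) $$ (p,q)) = 0" .
qed

context
  fixes D U :: "complex mat" and l :: "nat \<Rightarrow> real" and n :: nat
  assumes sd: "spec_decomp D = (U,l)" and dr: "dim_row D = n" and Uc: "U \<in> carrier_mat n n"
    and UU: "adj U * U = 1\<^sub>m n" and UU': "U * adj U = 1\<^sub>m n" and De: "D = U * diag_c n l * adj U"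
begin

lemma qCov_formula:
  assumes X: "X \<in> carrier_mat n n" and Y: "Y \<in> carrier_mat n n"
  shows "qCov g D X Y = (\<Sum>s<n. \<Sum>r<n. cnj ((adj U * X * U) $$ (s,r)) * complex_of_real (mean g (l s) (l r)) * (adj U * Y * U) $$ (s,r))
     - (\<Sum>r<n. complex_of_real (l r) * cnj ((adj U * X * U) $$ (r,r))) * (\<Sum>r<n. complex_of_real (l r) * (adj U * Y * U) $$ (r,r))"
proof -
  define M where "M = mat n n (\<lambda>(i,j). complex_of_real (mean g (l i) (l j)) * (adj U * Y * U) $$ (i,j))"
  have Mc: "M \<in> carrier_mat n n" unfolding M_def by simp
  have J: "J_op g D Y = U * M * adj U" unfolding J_op_def M_def by (rule schur_op_eq[OF sd dr])
  have t1: "mtrace (adj X * J_op g D Y) = (\<Sum>s<n. \<Sum>r<n. cnj ((adj U * X * U) $$ (s,r)) * complex_of_real (mean g (l s) (l r)) * (adj U * Y * U) $$ (s,r))"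
  proof -
    have "mtrace (adj X * J_op g D Y) = (\<Sum>r<n. \<Sum>s<n. (adj U * adj X * U) $$ (r,s) * M $$ (s,r))"
      unfolding J by (rule trace_conj[OF Uc _ Mc]) (use X in simp)
    also have "\<dots> = (\<Sum>r<n. \<Sum>s<n. cnj ((adj U * X * U) $$ (s,r)) * complex_of_real (mean g (l s) (l r)) * (adj U * Y * U) $$ (s,r))"
      by (intro sum.cong refl) (simp add: adj_conj_entry[OF Uc X] M_def mult_ac)
    also have "\<dots> = (\<Sum>s<n. \<Sum>r<n. cnj ((adj U * X * U) $$ (s,r)) * complex_of_real (mean g (l s) (l r)) * (adj U * Y * U) $$ (s,r))"
      by (rule sum.swap)
    finally show ?thesis .
  qed
  have t2: "mtrace (D * adj X) = (\<Sum>r<n. complex_of_real (l r) * cnj ((adj U * X * U) $$ (r,r)))"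
    unfolding trace_D[OF Uc De adj_carrier_mat[OF X]]
    by (intro sum.cong refl) (simp add: adj_conj_entry[OF Uc X])
  have t3: "mtrace (D * Y) = (\<Sum>r<n. complex_of_real (l r) * (adj U * Y * U) $$ (r,r))"
    by (rule trace_D[OF Uc De Y])
  show ?thesis unfolding qCov_def t1 t2 t3 ..
qed

lemma qFisher_formula:
  assumes X: "X \<in> carrier_mat n n" and Y: "Y \<in> carrier_mat n n"
  shows "qFisher f D (commutator D X) (commutator D Y) =
     (\<Sum>s<n. \<Sum>r<n. cnj ((adj U * X * U) $$ (s,r)) * complex_of_real ((l s - l r)^2 / mean f (l s) (l r)) * (adj U * Y * U) $$ (s,r))"
proof -
  have Dc: "D \<in> carrier_mat n n" unfolding De using Uc by auto
  define CX where "CX = commutator D X"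
  define CY where "CY = commutator D Y"
  have CXc: "CX \<in> carrier_mat n n" unfolding CX_def commutator_def using Dc X by auto
  have CYc: "CY \<in> carrier_mat n n" unfolding CY_def commutator_def using Dc Y by auto
  define M where "M = mat n n (\<lambda>(i,j). complex_of_real (1 / mean f (l i) (l j)) * (adj U * CY * U) $$ (i,j))"
  have Mc: "M \<in> carrier_mat n n" unfolding M_def by simp
  have J: "J_inv f D CY = U * M * adj U" unfolding J_inv_def M_def by (rule schur_op_eq[OF sd dr])
  have "qFisher f D CX CY = (\<Sum>r<n. \<Sum>s<n. (adj U * adj CX * U) $$ (r,s) * M $$ (s,r))"
    unfolding qFisher_def J by (rule trace_conj[OF Uc _ Mc]) (use CXc in simp)
  also have "\<dots> = (\<Sum>r<n. \<Sum>s<n. cnj ((adj U * X * U) $$ (s,r)) * complex_of_real ((l s - l r)^2 / mean f (l s) (l r)) * (adj U * Y * U) $$ (s,r))"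
  proof (intro sum.cong refl)
    fix r s assume rs: "r \<in> {..<n}" "s \<in> {..<n}"
    have "(adj U * adj CX * U) $$ (r,s) = cnj ((adj U * CX * U) $$ (s,r))"
      using adj_conj_entry[OF Uc CXc] rs by simp
    also have "(adj U * CX * U) $$ (s,r) = complex_of_real (l s - l r) * (adj U * X * U) $$ (s,r)"
      unfolding CX_def using conj_comm[OF Uc UU UU' De X] rs by simp
    finally have e1: "(adj U * adj CX * U) $$ (r,s) = complex_of_real (l s - l r) * cnj ((adj U * X * U) $$ (s,r))"
      by simp
    have e2: "M $$ (s,r) = complex_of_real (1 / mean f (l s) (l r)) * (complex_of_real (l s - l r) * (adj U * Y * U) $$ (s,r))"
      unfolding M_def CY_def using conj_comm[OF Uc UU UU' De Y] rs by simp
    show "(adj U * adj CX * U) $$ (r,s) * M $$ (s,r) =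
      cnj ((adj U * X * U) $$ (s,r)) * complex_of_real ((l s - l r)^2 / mean f (l s) (l r)) * (adj U * Y * U) $$ (s,r)"
      unfolding e1 e2 by (simp add: power2_eq_square divide_inverse mult_ac)
  qed
  also have "\<dots> = (\<Sum>s<n. \<Sum>r<n. cnj ((adj U * X * U) $$ (s,r)) * complex_of_real ((l s - l r)^2 / mean f (l s) (l r)) * (adj U * Y * U) $$ (s,r))"
    by (rule sum.swap)
  finally show ?thesis unfolding CX_def CY_def .
qed

end




theorem theorem3:
  fixes n m :: nat and D :: "complex mat" and f g :: "real \<Rightarrow> real" and c :: real
    and A :: "nat \<Rightarrow> complex mat"
  assumes D: "density n D"
    and f: "standard f" and g: "standard g"
    and c: "c > 0" and fg: "\<forall>x>0. g x \<ge> c * (x - 1)^2 / f x"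
    and m: "m \<ge> 1"
    and A: "\<forall>i<m. hermitian n (A i)"
  shows "det (mat m m (\<lambda>(i,j). complex_of_real c *
              qFisher f D (commutator D (A i)) (commutator D (A j))))
         \<le> det (mat m m (\<lambda>(i,j). qCov g D (A i) (A j)))
    \<and> (det (mat m m (\<lambda>(i,j). qCov g D (A i) (A j))) =
         det (mat m m (\<lambda>(i,j). complex_of_real c *
              qFisher f D (commutator D (A i)) (commutator D (A j))))
       \<longleftrightarrow> (\<exists>a :: nat \<Rightarrow> complex. (\<exists>i<m. a i \<noteq> 0) \<and>
               (\<forall>r<n. \<forall>s<n. (\<Sum>i<m. a i *
                   (A i - mtrace (D * A i) \<cdot>\<^sub>m 1\<^sub>m n) $$ (r,s)) = 0)))
    \<and> ((\<exists>a :: nat \<Rightarrow> complex. (\<exists>i<m. a i \<noteq> 0) \<and>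
               (\<forall>r<n. \<forall>s<n. (\<Sum>i<m. a i *
                   (A i - mtrace (D * A i) \<cdot>\<^sub>m 1\<^sub>m n) $$ (r,s)) = 0))
         \<longrightarrow> det (mat m m (\<lambda>(i,j). qCov g D (A i) (A j))) = 0 \<and>
             det (mat m m (\<lambda>(i,j). complex_of_real c *
              qFisher f D (commutator D (A i)) (commutator D (A j)))) = 0)"
proof -
  have pD: "pos_def n D" and trD: "mtrace D = 1" using D unfolding density_def by auto
  have hD: "hermitian n D" using pD unfolding pos_def_def by auto
  have Dc: "D \<in> carrier_mat n n" using hD by (rule hermitian_carrier)
  have dr: "dim_row D = n" using Dc by (rule carrier_matD)
  obtain U l where sd: "spec_decomp D = (U,l)" by (cases "spec_decomp D") auto
  note sp = spec_decomp_prop[OF hD sd]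
  have Uc: "U \<in> carrier_mat n n" and UU: "adj U * U = 1\<^sub>m n" and UU': "U * adj U = 1\<^sub>m n"
    using sp(1) unitary_right[OF sp(1)] by (auto simp: unitary_def)
  have De: "D = U * diag_c n l * adj U" by (rule sp(2))
  have Lam: "adj U * D * U = diag_c n l"
    unfolding De by (rule conj_cancel[OF Uc UU diag_c_carrier])
  have lpos: "l r > 0" if r: "r < n" for r
  proof -
    have "complex_of_real (l r) = qform (adj U * D * U) (unit_vec n r)"
      unfolding Lam using qform_unit[OF diag_c_carrier r] r by simp
    also have "\<dots> = qform D (U *\<^sub>v unit_vec n r)" by (rule qform_conj[OF Uc Dc]) simp
    finally have "l r = Re (qform D (U *\<^sub>v unit_vec n r))" by (metis Re_complex_of_real)
    moreover have "U *\<^sub>v unit_vec n r \<noteq> 0\<^sub>v n"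
      by (rule inv_nonzero[of U n "adj U"]) (use Uc UU r in auto)
    ultimately show ?thesis using pD Uc unfolding pos_def_def by auto
  qed
  have lsum: "(\<Sum>r<n. complex_of_real (l r)) = 1"
  proof -
    have "mtrace (D * 1\<^sub>m n) = (\<Sum>r<n. complex_of_real (l r) * (adj U * 1\<^sub>m n * U) $$ (r,r))"
      by (rule trace_D[OF Uc De]) simp
    also have "\<dots> = (\<Sum>r<n. complex_of_real (l r))"
      using UU Uc by (intro sum.cong refl) simp
    finally show ?thesis using trD Dc by simp
  qed
  have Ac: "\<And>i. i < m \<Longrightarrow> A i \<in> carrier_mat n n" using A by (auto simp: hermitian_carrier)
  define Xt where "Xt = (\<lambda>i. adj U * A i * U)"
  define t where "t = (\<lambda>i. mtrace (D * A i))"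
  have t_eq: "t i = (\<Sum>r<n. complex_of_real (l r) * Xt i $$ (r,r))" if "i < m" for i
    unfolding t_def Xt_def by (rule trace_D[OF Uc De Ac[OF that]])
  define K where "K = {..<n} \<times> {..<n}"
  define v where "v = (\<lambda>i (k :: nat \<times> nat). (adj U * (A i - t i \<cdot>\<^sub>m 1\<^sub>m n) * U) $$ k)"
  have v_eq: "v i k = Xt i $$ k - (if fst k = snd k then t i else 0)" if "i < m" "k \<in> K" for i k
    using conj_shift[OF Uc UU Ac[OF that(1)], of "fst k" "snd k" "t i"] that
    unfolding v_def Xt_def K_def by (cases k) auto
  define w1 where "w1 = (\<lambda>k :: nat \<times> nat. mean g (l (fst k)) (l (snd k)))"
  define w2 where "w2 = (\<lambda>k :: nat \<times> nat. c * (l (fst k) - l (snd k))^2 / mean f (l (fst k)) (l (snd k)))"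
  have w1d: "w1 (p,p) = l p" for p unfolding w1_def using mean_diag[OF g] by simp
  have w2d: "w2 (p,p) = 0" for p unfolding w2_def by simp
  have G1: "mat m m (\<lambda>(i,j). qCov g D (A i) (A j)) = gram m K w1 v"
  proof (rule eq_matI)
    fix i j assume "i < dim_row (gram m K w1 v)" "j < dim_col (gram m K w1 v)"
    then have ij: "i < m" "j < m" by (auto simp: gram_def)
    have "gram m K w1 v $$ (i,j) = (\<Sum>k\<in>K. complex_of_real (w1 k) * cnj (v i k) * v j k)"
      using ij by (simp add: gram_def)
    also have "\<dots> = (\<Sum>k\<in>K. complex_of_real (w1 k) * cnj (Xt i $$ k - (if fst k = snd k then t i else 0)) *
           (Xt j $$ k - (if fst k = snd k then t j else 0)))"
      using v_eq ij by (intro sum.cong refl) auto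
    also have "\<dots> = (\<Sum>k\<in>K. complex_of_real (w1 k) * cnj (Xt i $$ k) * Xt j $$ k)
        - cnj (t i) * (\<Sum>p<n. complex_of_real (w1 (p,p)) * Xt j $$ (p,p))
        - t j * (\<Sum>p<n. complex_of_real (w1 (p,p)) * cnj (Xt i $$ (p,p)))
        + cnj (t i) * t j * (\<Sum>p<n. complex_of_real (w1 (p,p)))"
      unfolding K_def by (rule centered_sum)
    also have "(\<Sum>p<n. complex_of_real (w1 (p,p)) * Xt j $$ (p,p)) = t j"
      unfolding w1d t_eq[OF ij(2)] ..
    also have "(\<Sum>p<n. complex_of_real (w1 (p,p)) * cnj (Xt i $$ (p,p))) = cnj (t i)"
      unfolding w1d t_eq[OF ij(1)] by (simp add: cnj_sum)
    also have "(\<Sum>p<n. complex_of_real (w1 (p,p))) = 1" unfolding w1d by (rule lsum)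
    also have "(\<Sum>k\<in>K. complex_of_real (w1 k) * cnj (Xt i $$ k) * Xt j $$ k) =
        (\<Sum>s<n. \<Sum>r<n. cnj (Xt i $$ (s,r)) * complex_of_real (mean g (l s) (l r)) * Xt j $$ (s,r))"
      unfolding K_def sum.cartesian_product' w1_def by (simp add: mult_ac)
    finally have "gram m K w1 v $$ (i,j) = (\<Sum>s<n. \<Sum>r<n. cnj (Xt i $$ (s,r)) * complex_of_real (mean g (l s) (l r)) * Xt j $$ (s,r))
        - cnj (t i) * t j" by (simp add: algebra_simps)
    also have "\<dots> = qCov g D (A i) (A j)"
      unfolding qCov_formula[OF sd dr Uc UU UU' De Ac[OF ij(1)] Ac[OF ij(2)]]
        t_eq[OF ij(1)] t_eq[OF ij(2)] Xt_def by (simp add: cnj_sum)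
    finally show "mat m m (\<lambda>(i,j). qCov g D (A i) (A j)) $$ (i,j) = gram m K w1 v $$ (i,j)"
      using ij by simp
  qed (auto simp: gram_def)
  have G2: "mat m m (\<lambda>(i,j). complex_of_real c * qFisher f D (commutator D (A i)) (commutator D (A j))) = gram m K w2 v"
  proof (rule eq_matI)
    fix i j assume "i < dim_row (gram m K w2 v)" "j < dim_col (gram m K w2 v)"
    then have ij: "i < m" "j < m" by (auto simp: gram_def)
    have "gram m K w2 v $$ (i,j) = (\<Sum>k\<in>K. complex_of_real (w2 k) * cnj (v i k) * v j k)"
      using ij by (simp add: gram_def)
    also have "\<dots> = (\<Sum>k\<in>K. complex_of_real (w2 k) * cnj (Xt i $$ k - (if fst k = snd k then t i else 0)) *
           (Xt j $$ k - (if fst k = snd k then t j else 0)))"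
      using v_eq ij by (intro sum.cong refl) auto
    also have "\<dots> = (\<Sum>k\<in>K. complex_of_real (w2 k) * cnj (Xt i $$ k) * Xt j $$ k)
        - cnj (t i) * (\<Sum>p<n. complex_of_real (w2 (p,p)) * Xt j $$ (p,p))
        - t j * (\<Sum>p<n. complex_of_real (w2 (p,p)) * cnj (Xt i $$ (p,p)))
        + cnj (t i) * t j * (\<Sum>p<n. complex_of_real (w2 (p,p)))"
      unfolding K_def by (rule centered_sum)
    also have "\<dots> = (\<Sum>k\<in>K. complex_of_real (w2 k) * cnj (Xt i $$ k) * Xt j $$ k)"
      unfolding w2d by simp
    also have "\<dots> = complex_of_real c * (\<Sum>s<n. \<Sum>r<n. cnj (Xt i $$ (s,r)) * complex_of_real ((l s - l r)^2 / mean f (l s) (l r)) * Xt j $$ (s,r))"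
      unfolding K_def sum.cartesian_product' w2_def by (simp add: sum_distrib_left mult_ac)
    also have "\<dots> = complex_of_real c * qFisher f D (commutator D (A i)) (commutator D (A j))"
      unfolding qFisher_formula[OF sd dr Uc UU UU' De Ac[OF ij(1)] Ac[OF ij(2)]] Xt_def ..
    finally show "mat m m (\<lambda>(i,j). complex_of_real c * qFisher f D (commutator D (A i)) (commutator D (A j))) $$ (i,j)
        = gram m K w2 v $$ (i,j)"
      using ij by simp
  qed (auto simp: gram_def)
  have w: "\<forall>k\<in>K. 0 \<le> w2 k \<and> w2 k < w1 k"
  proof
    fix k assume k: "k \<in> K"
    obtain p q where kpq: "k = (p,q)" by (cases k)
    have pq: "p < n" "q < n" using k kpq unfolding K_def by auto
    have lp: "l p > 0" "l q > 0" using lpos pq by auto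
    show "0 \<le> w2 k \<and> w2 k < w1 k"
    proof (cases "p = q")
      case True
      then show ?thesis unfolding kpq using w1d w2d lp by simp
    next
      case False
      then have ne: "l p \<noteq> l q \<or> l p = l q" by simp
      have mf: "mean f (l p) (l q) > 0" using mean_pos[OF f lp] .
      have w2nn: "0 \<le> w2 k" unfolding kpq w2_def using c mf by simp
      show ?thesis
      proof (cases "l p = l q")
        case True
        then have "w2 k = 0" unfolding kpq w2_def by simp
        moreover have "w1 k > 0" unfolding kpq w1_def using mean_pos[OF g lp] by simp
        ultimately show ?thesis by simp
      next
        case False
        have "mean g (l p) (l q) > c * (l p - l q)^2 / mean f (l p) (l q)"
          by (rule mean_bound[OF f g c fg lp False])
        then show ?thesis using w2nn unfolding kpq w1_def w2_def by simp
      qed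
    qed
  qed
  have finK: "finite K" unfolding K_def by simp
  have dep: "(\<exists>a :: nat \<Rightarrow> complex. (\<exists>i<m. a i \<noteq> 0) \<and>
               (\<forall>r<n. \<forall>s<n. (\<Sum>i<m. a i * (A i - mtrace (D * A i) \<cdot>\<^sub>m 1\<^sub>m n) $$ (r,s)) = 0))
     \<longleftrightarrow> (\<exists>a. (\<exists>i<m. a i \<noteq> 0) \<and> (\<forall>k\<in>K. (\<Sum>i<m. a i * v i k) = 0))"
  proof -
    define Z where "Z = (\<lambda>i. A i - t i \<cdot>\<^sub>m 1\<^sub>m n)"
    have Zc: "\<forall>i<m. Z i \<in> carrier_mat n n" unfolding Z_def using Ac by auto
    have Zt: "\<forall>i<m. adj U * Z i * U \<in> carrier_mat n n" using Zc Uc by auto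
    have bck: "\<forall>i<m. adj (adj U) * (adj U * Z i * U) * adj U = Z i"
      using Zc conj_cancel2[OF Uc UU'] by simp
    have eq: "(\<forall>r<n. \<forall>s<n. (\<Sum>i<m. a i * Z i $$ (r,s)) = 0) \<longleftrightarrow> (\<forall>k\<in>K. (\<Sum>i<m. a i * v i k) = 0)"
      for a :: "nat \<Rightarrow> complex"
    proof
      assume h: "\<forall>r<n. \<forall>s<n. (\<Sum>i<m. a i * Z i $$ (r,s)) = 0"
      have "\<forall>p<n. \<forall>q<n. (\<Sum>i<m. a i * (adj U * Z i * U) $$ (p,q)) = 0"
        by (rule lincomb_conj[OF Uc Zc h])
      then show "\<forall>k\<in>K. (\<Sum>i<m. a i * v i k) = 0" unfolding K_def v_def Z_def by auto
    next
      assume h: "\<forall>k\<in>K. (\<Sum>i<m. a i * v i k) = 0"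
      have h': "\<forall>p<n. \<forall>q<n. (\<Sum>i<m. a i * (adj U * Z i * U) $$ (p,q)) = 0"
        using h unfolding K_def v_def Z_def by auto
      have "\<forall>r<n. \<forall>s<n. (\<Sum>i<m. a i * (adj (adj U) * (adj U * Z i * U) * adj U) $$ (r,s)) = 0"
        by (rule lincomb_conj[OF adj_carrier_mat[OF Uc] Zt h'])
      then show "\<forall>r<n. \<forall>s<n. (\<Sum>i<m. a i * Z i $$ (r,s)) = 0"
        using bck by simp
    qed
    show ?thesis unfolding Z_def[symmetric, unfolded t_def] using eq unfolding Z_def t_def by simp
  qed
  show ?thesis unfolding G1 G2 dep using gram_det[OF finK w m] by blast
qed


end
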